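(* In the $q$-boson algebra $\mathcal H_n$ (with central parameter $z$), the following identities of formal power series in $u$ hold: $$T(u)Q^+(u)=Q^+(uq^2)+\Delta(u)Q^+(uq^{-2}),\qquad Q^-(u)T(u)=Q^-(uq^{-2})+\Delta(uq^2)Q^-(uq^2),$$ where $\Delta(u)=zq^{2N}u^n$.
   Context: $q$ is an indeterminate, $n\ge1$. $\mathcal H_n$ is the $\mathbb C(q)$-algebra generated by $\beta_i,\beta_i^*,q^{\pm N_i}$ ($i=1,\dots,n$) with relations: $q^{\pm N_i}$ mutually inverse and commuting, $q^{N_i}\beta_j=q^{-\delta_{ij}}\beta_jq^{N_i}$, $q^{N_i}\beta_j^*=q^{\delta_{ij}}\beta^*_jq^{N_i}$, $\beta_i\beta_j^*-\beta_j^*\beta_i=\delta_{ij}(1-q^2)q^{2N_i}$, $\beta_i\beta_i^*-q^2\beta_i^*\beta_i=1-q^2$, generators at different sites commute. $q^{2N}:=\prod_{i=1}^n(q^{N_i})^2$; $(q^2)_m=\prod_{j=1}^m(1-q^{2j})$; $z$ is a central parameter. Transfer matrix: with $L_j(u)=\begin{pmatrix}1&u\beta_j^*\\ \beta_j&u\end{pmatrix}$ and $L_n(u)\cdots L_1(u)=\begin{pmatrix}A(u)&B(u)\\C(u)&D(u)\end{pmatrix}$ (ordinary $2\times2$ matrix product, entries multiplied in order), $T(u)=A(u)+zD(u)$. $Q$-operators: $Q^\pm(u)=\sum_{m_1,\dots,m_n\ge0}z^{m_1}\ell^\pm_1(m_1,m_2)\ell^\pm_2(m_2,m_3)\cdots\ell^\pm_n(m_n,m_1)$,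 with $\ell^+_i(a,b)=(-u)^a(\beta_i^* )^a\beta_i^b/(q^2)_a$ and $\ell^-_i(a,b)=u^aq^{a(a+1)}\beta_i^b(\beta_i^* )^a/(q^2)_a$; these are formal power series in $u$ with coefficients in $\mathcal H_n[z]$. Substitutions $u\mapsto uq^{\pm2}$ are made in these power series. *)

theory Defs
  imports Complex_Main "HOL-Computational_Algebra.Formal_Power_Series"
    "HOL-Computational_Algebra.Fraction_Field" "HOL-Computational_Algebra.Polynomial"
begin

type_synonym cq = "complex poly fract"

definition qf :: cq where "qf = Fract [:0, 1:] 1"

definition qpoch :: "nat \<Rightarrow> cq" where
  "qpoch m = (\<Prod>j\<in>{1..m}. 1 - qf ^ (2 * j))"

text \<open>A C(q)-algebra (ring A with a ring homomorphism emb from C(q) into its centre),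
  containing elements beta i, betas i (= beta_i^* ), K i (= q^{N_i}), Kinv i (= q^{-N_i}),
  i = 1..n, satisfying the defining relations of the q-boson algebra H_n, together
  with a central element z.  Since H_n[z] is presented by generators and relations,
  an identity holds in H_n[z] iff it holds in every such algebra.\<close>
definition qboson_alg ::
  "nat \<Rightarrow> (cq \<Rightarrow> 'a::ring_1) \<Rightarrow> (nat \<Rightarrow> 'a) \<Rightarrow> (nat \<Rightarrow> 'a) \<Rightarrow> (nat \<Rightarrow> 'a) \<Rightarrow> (nat \<Rightarrow> 'a) \<Rightarrow> 'a \<Rightarrow> bool"
where
  "qboson_alg n emb beta betas K Kinv z \<longleftrightarrow>
     \<comment> \<open>emb is a unital ring homomorphism onto central elements\<close>
     emb 0 = 0 \<and> emb 1 = 1 \<and>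
     (\<forall>a b. emb (a + b) = emb a + emb b) \<and> (\<forall>a b. emb (a * b) = emb a * emb b) \<and>
     (\<forall>c x. emb c * x = x * emb c) \<and>
     \<comment> \<open>z is central\<close>
     (\<forall>x. z * x = x * z) \<and>
     (\<forall>i\<in>{1..n}. \<forall>j\<in>{1..n}.
        \<comment> \<open>q^{\<plusminus>N_i} mutually inverse and commuting\<close>
        K i * Kinv i = 1 \<and> Kinv i * K i = 1 \<and>
        K i * K j = K j * K i \<and> K i * Kinv j = Kinv j * K i \<and> Kinv i * Kinv j = Kinv j * Kinv i \<and>
        \<comment> \<open>q^{N_i} beta_j = q^{-delta_ij} beta_j q^{N_i}, q^{N_i} beta_j^* = q^{delta_ij} beta_j^* q^{N_i}\<close>
        K i * beta j = emb (if i = j then inverse qf else 1) * beta j * K i \<and>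
        K i * betas j = emb (if i = j then qf else 1) * betas j * K i \<and>
        \<comment> \<open>beta_i beta_j^* - beta_j^* beta_i = delta_ij (1-q^2) q^{2N_i}\<close>
        beta i * betas j - betas j * beta i = (if i = j then emb (1 - qf ^ 2) * K i ^ 2 else 0) \<and>
        \<comment> \<open>beta_i beta_i^* - q^2 beta_i^* beta_i = 1 - q^2\<close>
        beta i * betas i - emb (qf ^ 2) * betas i * beta i = emb (1 - qf ^ 2) \<and>
        \<comment> \<open>generators at different sites commute\<close>
        (i \<noteq> j \<longrightarrow>
           beta i * beta j = beta j * beta i \<and> betas i * betas j = betas j * betas i \<and>
           beta i * betas j = betas j * beta i \<and>
           Kinv i * beta j = beta j * Kinv i \<and> Kinv i * betas j = betas j * Kinv i))"

definition fps_scale :: "'a::ring_1 \<Rightarrow> 'a fps \<Rightarrow> 'a fps" where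
  "fps_scale c f = Abs_fps (\<lambda>k. c ^ k * fps_nth f k)"

text \<open>2x2 matrices over fps as quadruples (a, b, c, d) = [[a, b], [c, d]].\<close>
type_synonym 'a mat2 = "'a fps \<times> 'a fps \<times> 'a fps \<times> 'a fps"

definition mat2_mult :: "'a::ring_1 mat2 \<Rightarrow> 'a mat2 \<Rightarrow> 'a mat2" where
  "mat2_mult M N = (case M of (a, b, c, d) \<Rightarrow> case N of (a', b', c', d') \<Rightarrow>
     (a * a' + b * c', a * b' + b * d', c * a' + d * c', c * b' + d * d'))"

definition Lop :: "(nat \<Rightarrow> 'a::ring_1) \<Rightarrow> (nat \<Rightarrow> 'a) \<Rightarrow> nat \<Rightarrow> 'a mat2" where
  "Lop beta betas j = (1, fps_X * fps_const (betas j), fps_const (beta j), fps_X)"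

fun monodromy :: "(nat \<Rightarrow> 'a::ring_1) \<Rightarrow> (nat \<Rightarrow> 'a) \<Rightarrow> nat \<Rightarrow> 'a mat2" where
  "monodromy beta betas 0 = (1, 0, 0, 1)"
| "monodromy beta betas (Suc k) = mat2_mult (Lop beta betas (Suc k)) (monodromy beta betas k)"

definition transfer :: "nat \<Rightarrow> (nat \<Rightarrow> 'a::ring_1) \<Rightarrow> (nat \<Rightarrow> 'a) \<Rightarrow> 'a \<Rightarrow> 'a fps" where
  "transfer n beta betas z = (case monodromy beta betas n of (A, B, C, D) \<Rightarrow> A + fps_const z * D)"

text \<open>u-free parts of l^+_i(a,b) and l^-_i(a,b) (they carry the factor u^a).\<close>
definition ellp :: "(cq \<Rightarrow> 'a::ring_1) \<Rightarrow> (nat \<Rightarrow> 'a) \<Rightarrow> (nat \<Rightarrow> 'a) \<Rightarrow> nat \<Rightarrow> nat \<Rightarrow> nat \<Rightarrow> 'a" where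
  "ellp emb beta betas i a b = emb ((- 1) ^ a / qpoch a) * betas i ^ a * beta i ^ b"

definition ellm :: "(cq \<Rightarrow> 'a::ring_1) \<Rightarrow> (nat \<Rightarrow> 'a) \<Rightarrow> (nat \<Rightarrow> 'a) \<Rightarrow> nat \<Rightarrow> nat \<Rightarrow> nat \<Rightarrow> 'a" where
  "ellm emb beta betas i a b = emb (qf ^ (a * (a + 1)) / qpoch a) * beta i ^ b * betas i ^ a"

definition tuples :: "nat \<Rightarrow> nat \<Rightarrow> (nat \<Rightarrow> nat) set" where
  "tuples n k = {m. (\<forall>i. i \<notin> {1..n} \<longrightarrow> m i = 0) \<and> (\<Sum>i\<in>{1..n}. m i) = k}"

definition cnext :: "nat \<Rightarrow> nat \<Rightarrow> nat" where
  "cnext n i = (if i = n then 1 else i + 1)"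

text \<open>Q(u) = sum_m z^{m_1} l_1(m_1,m_2) l_2(m_2,m_3) ... l_n(m_n,m_1), as fps in u
  (the coefficient of u^k collects the tuples with m_1+...+m_n = k; ordered product).\<close>
definition Qop :: "nat \<Rightarrow> (nat \<Rightarrow> nat \<Rightarrow> nat \<Rightarrow> 'a::ring_1) \<Rightarrow> 'a \<Rightarrow> 'a fps" where
  "Qop n ell z = Abs_fps (\<lambda>k. \<Sum>m\<in>tuples n k.
      z ^ m 1 * prod_list (map (\<lambda>i. ell i (m i) (m (cnext n i))) [1..<n+1]))"

definition Qplus where "Qplus n emb beta betas z = Qop n (ellp emb beta betas) z"
definition Qminus where "Qminus n emb beta betas z = Qop n (ellm emb beta betas) z"

definition Delta :: "nat \<Rightarrow> (nat \<Rightarrow> 'a::ring_1) \<Rightarrow> 'a \<Rightarrow> 'a fps" where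
  "Delta n K z = fps_const (z * prod_list (map (\<lambda>i. K i ^ 2) [1..<n+1])) * fps_X ^ n"

end

theory Submission
  imports Defs
begin
unbundle fps_syntax



section \<open>Scalars\<close>

lemma qf_pow: "qf ^ k = Fract (monom 1 k) 1"
  unfolding qf_def by (induct k) (auto simp: monom_Suc One_fract_def)

lemma qf_pow_eq_1: "qf ^ k = 1 \<longleftrightarrow> k = 0"
  by (simp add: qf_pow One_fract_def eq_fract monom_eq_1_iff)

lemma qf_nz: "qf \<noteq> 0"
  using qf_pow_eq_1[of 1] by (auto simp: qf_def eq_fract Zero_fract_def)

lemma one_minus_qf_pow_nz: "k > 0 \<Longrightarrow> 1 - qf ^ k \<noteq> 0"
  using qf_pow_eq_1[of k] by auto

lemma qpoch_Suc: "qpoch (Suc a) = qpoch a * (1 - qf ^ (2 * Suc a))"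
  unfolding qpoch_def by (simp add: prod.nat_ivl_Suc')

lemma qpoch_0[simp]: "qpoch 0 = 1"
  unfolding qpoch_def by simp

lemma qpoch_nz: "qpoch a \<noteq> 0"
proof (induct a)
  case (Suc a)
  have "1 - qf ^ (2 * Suc a) \<noteq> 0" by (rule one_minus_qf_pow_nz) simp
  then show ?case using Suc by (simp only: qpoch_Suc) simp
qed simp

section \<open>Formal power series helpers\<close>

definition vanish :: "nat \<Rightarrow> 'a::ring_1 fps \<Rightarrow> bool" where
  "vanish c F \<longleftrightarrow> (\<forall>k<c. F $ k = 0)"

definition isum :: "(nat \<Rightarrow> 'a::ring_1 fps) \<Rightarrow> 'a fps" where
  "isum f = Abs_fps (\<lambda>k. \<Sum>c\<le>k. f c $ k)"

definition pr :: "(nat \<Rightarrow> 'a::ring_1 fps) \<Rightarrow> nat \<Rightarrow> 'a fps" where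
  "pr f c = (if c = 0 then 0 else f (c - 1))"

definition mnm :: "'a::ring_1 \<Rightarrow> nat \<Rightarrow> 'a fps" where
  "mnm e d = fps_const e * fps_X ^ d"

lemma mono_nth: "mnm e d $ k = (if k = d then e else 0)"
  by (simp add: mnm_def)

lemma vanish_mono: "c \<le> d \<Longrightarrow> vanish c (mnm e d)"
  by (auto simp: vanish_def mono_nth)

lemma vanish_mult_left: "vanish c G \<Longrightarrow> vanish c (F * G)"
  unfolding vanish_def fps_mult_nth by (auto intro!: sum.neutral)

lemma vanish_mult_right: "vanish c F \<Longrightarrow> vanish c (F * G)"
  unfolding vanish_def fps_mult_nth by (auto intro!: sum.neutral)

lemma vanish_mult: "vanish i F \<Longrightarrow> vanish j G \<Longrightarrow> vanish (i + j) (F * G)"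
proof -
  assume F: "vanish i F" and G: "vanish j G"
  show ?thesis unfolding vanish_def fps_mult_nth
  proof (intro allI impI sum.neutral ballI)
    fix k x assume "k < i + j" "x \<in> {0..k}"
    then have "x < i \<or> k - x < j" by auto
    then show "F $ x * G $ (k - x) = 0" using F G by (auto simp: vanish_def)
  qed
qed

lemma vanish_add: "vanish c F \<Longrightarrow> vanish c G \<Longrightarrow> vanish c (F + G)"
  by (simp add: vanish_def)
lemma vanish_diff: "vanish c F \<Longrightarrow> vanish c G \<Longrightarrow> vanish c (F - G)"
  by (simp add: vanish_def)
lemma vanish_mono_le: "vanish d F \<Longrightarrow> c \<le> d \<Longrightarrow> vanish c F"
  by (simp add: vanish_def)
lemma vanish_0[simp]: "vanish c 0" by (simp add: vanish_def)

lemma isum_nth: "isum f $ k = (\<Sum>c\<le>k. f c $ k)"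
  by (simp add: isum_def)

lemma isum_add: "isum (\<lambda>c. f c + g c) = isum f + isum g"
  by (rule fps_ext) (simp add: isum_nth sum.distrib)
lemma isum_diff: "isum (\<lambda>c. f c - g c) = isum f - isum g"
  by (rule fps_ext) (simp add: isum_nth sum_subtractf)
lemma isum_zero: "isum (\<lambda>c. 0) = 0"
  by (rule fps_ext) (simp add: isum_nth)
lemma isum_cong: "(\<And>c. f c = g c) \<Longrightarrow> isum f = isum g"
  by (rule arg_cong[where f=isum]) auto

lemma isum_vanish: "(\<And>c. vanish d (f c)) \<Longrightarrow> vanish d (isum f)"
  by (simp add: vanish_def isum_nth)

lemma isum_mult_left:
  assumes "\<And>c. vanish c (f c)"
  shows "A * isum f = isum (\<lambda>c. A * f c)"
proof (rule fps_ext)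
  fix k
  have "(A * isum f) $ k = (\<Sum>i=0..k. \<Sum>c\<le>k - i. A $ i * f c $ (k - i))"
    by (simp add: fps_mult_nth isum_nth sum_distrib_left)
  also have "\<dots> = (\<Sum>i=0..k. \<Sum>c\<le>k. A $ i * f c $ (k - i))"
  proof (rule sum.cong[OF refl])
    fix i assume i: "i \<in> {0..k}"
    show "(\<Sum>c\<le>k - i. A $ i * f c $ (k - i)) = (\<Sum>c\<le>k. A $ i * f c $ (k - i))"
      by (rule sum.mono_neutral_left) (use assms in \<open>auto simp: vanish_def\<close>)
  qed
  also have "\<dots> = (\<Sum>c\<le>k. \<Sum>i=0..k. A $ i * f c $ (k - i))"
    by (rule sum.swap)
  also have "\<dots> = isum (\<lambda>c. A * f c) $ k"
    by (simp add: isum_nth fps_mult_nth)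
  finally show "(A * isum f) $ k = isum (\<lambda>c. A * f c) $ k" .
qed

lemma isum_mult_right:
  assumes "\<And>c. vanish c (f c)"
  shows "isum f * A = isum (\<lambda>c. f c * A)"
proof (rule fps_ext)
  fix k
  have "(isum f * A) $ k = (\<Sum>i=0..k. \<Sum>c\<le>i. f c $ i * A $ (k - i))"
    by (simp add: fps_mult_nth isum_nth sum_distrib_right)
  also have "\<dots> = (\<Sum>i=0..k. \<Sum>c\<le>k. f c $ i * A $ (k - i))"
  proof (rule sum.cong[OF refl])
    fix i assume i: "i \<in> {0..k}"
    show "(\<Sum>c\<le>i. f c $ i * A $ (k - i)) = (\<Sum>c\<le>k. f c $ i * A $ (k - i))"
      by (rule sum.mono_neutral_left) (use assms i in \<open>auto simp: vanish_def\<close>)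
  qed
  also have "\<dots> = (\<Sum>c\<le>k. \<Sum>i=0..k. f c $ i * A $ (k - i))"
    by (rule sum.swap)
  also have "\<dots> = isum (\<lambda>c. f c * A) $ k"
    by (simp add: isum_nth fps_mult_nth)
  finally show "(isum f * A) $ k = isum (\<lambda>c. f c * A) $ k" .
qed

lemma isum_pr:
  assumes "\<And>c. vanish (Suc c) (h c)"
  shows "isum (pr h) = isum h"
proof (rule fps_ext)
  fix k
  show "isum (pr h) $ k = isum h $ k"
  proof (cases k)
    case 0 then show ?thesis using assms[of 0] by (simp add: isum_nth pr_def vanish_def)
  next
    case (Suc k')
    have "isum (pr h) $ k = (\<Sum>c\<le>k'. h c $ k)"
      unfolding isum_nth Suc sum.atMost_Suc_shift by (simp add: pr_def)
    also have "\<dots> = (\<Sum>c\<le>k. h c $ k)"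
      using assms[of k] by (simp add: Suc vanish_def)
    finally show ?thesis by (simp add: isum_nth)
  qed
qed

lemma isum_telescope:
  assumes "\<And>c. vanish (Suc c) (h c)"
  shows "isum (\<lambda>c. h c - pr h c) = 0"
  using isum_pr[OF assms] by (simp add: isum_diff)

lemma pr_isum: "pr (\<lambda>a. isum (f a)) a = isum (\<lambda>c. pr (\<lambda>a. f a c) a)"
  by (simp add: pr_def isum_zero)




locale qb =
  fixes n :: nat and emb :: "cq \<Rightarrow> 'a::ring_1"
    and beta betas K Kinv :: "nat \<Rightarrow> 'a" and z :: 'a
  assumes alg: "qboson_alg n emb beta betas K Kinv z"
begin

lemma emb_0[simp]: "emb 0 = 0" and emb_1[simp]: "emb 1 = 1"
  and emb_add: "emb (a + b) = emb a + emb b" and emb_mult: "emb (a * b) = emb a * emb b"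
  and emb_central: "emb c * x = x * emb c" and z_central: "z * x = x * z"
  using alg unfolding qboson_alg_def by blast+
lemma site_rels: "i \<in> {1..n} \<Longrightarrow> j \<in> {1..n} \<Longrightarrow> 
        K i * Kinv i = 1 \<and> Kinv i * K i = 1 \<and>
        K i * K j = K j * K i \<and> K i * Kinv j = Kinv j * K i \<and> Kinv i * Kinv j = Kinv j * Kinv i \<and>
        K i * beta j = emb (if i = j then inverse qf else 1) * beta j * K i \<and>
        K i * betas j = emb (if i = j then qf else 1) * betas j * K i \<and>
        beta i * betas j - betas j * beta i = (if i = j then emb (1 - qf ^ 2) * K i ^ 2 else 0) \<and>
        beta i * betas i - emb (qf ^ 2) * betas i * beta i = emb (1 - qf ^ 2) \<and>
        (i \<noteq> j \<longrightarrow>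
           beta i * beta j = beta j * beta i \<and> betas i * betas j = betas j * betas i \<and>
           beta i * betas j = betas j * beta i \<and>
           Kinv i * beta j = beta j * Kinv i \<and> Kinv i * betas j = betas j * Kinv i)"
  using alg unfolding qboson_alg_def by blast

lemma emb_minus: "emb (- a) = - emb a"
  using emb_add[of a "-a"] minus_unique[of "emb a" "emb (-a)"] by simp

lemma emb_diff: "emb (a - b) = emb a - emb b"
  using emb_add[of a "-b"] by (simp add: emb_minus)

lemma emb_power: "emb (a ^ k) = emb a ^ k"
  by (induct k) (simp_all add: emb_mult)

lemma emb_inv: "a \<noteq> 0 \<Longrightarrow> emb (inverse a) * emb a = 1"
  by (simp add: emb_mult[symmetric])

lemma emb_inv': "a \<noteq> 0 \<Longrightarrow> emb a * emb (inverse a) = 1"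
  by (simp add: emb_mult[symmetric])

lemma emb_central_power: "emb c ^ k * x = x * emb c ^ k"
  by (simp only: emb_power[symmetric] emb_central)

lemma emb_pow_left: "x * (emb c ^ k * y) = emb c ^ k * (x * y)"
  by (subst mult.assoc[symmetric], subst emb_central_power[of c k x, symmetric], rule mult.assoc)

lemma emb_left: "x * (emb c * y) = emb c * (x * y)"
  by (subst mult.assoc[symmetric], subst emb_central[of c x, symmetric], rule mult.assoc)

lemma z_power_central: "z ^ k * x = x * z ^ k"
proof (induct k)
  case (Suc k)
  have "z ^ Suc k * x = z * (z ^ k * x)" by (simp add: mult.assoc)
  also have "\<dots> = (z * x) * z ^ k" by (simp add: Suc mult.assoc)
  also have "\<dots> = x * z ^ Suc k" by (simp add: z_central mult.assoc)
  finally show ?case .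
qed simp

lemma rel_K_beta: "i \<in> {1..n} \<Longrightarrow> K i * beta i = emb (inverse qf) * beta i * K i"
  using site_rels[of i i] by simp
lemma rel_K_betas: "i \<in> {1..n} \<Longrightarrow> K i * betas i = emb qf * betas i * K i"
  using site_rels[of i i] by simp
lemma rel_comm: "i \<in> {1..n} \<Longrightarrow> beta i * betas i - betas i * beta i = emb (1 - qf ^ 2) * K i ^ 2"
  using site_rels[of i i] by simp
lemma rel_q: "i \<in> {1..n} \<Longrightarrow> beta i * betas i - emb (qf ^ 2) * betas i * beta i = emb (1 - qf ^ 2)"
  using site_rels[of i i] by simp

lemma rel_diff: assumes "i \<in> {1..n}" "j \<in> {1..n}" "i \<noteq> j"
  shows "beta i * beta j = beta j * beta i" "betas i * betas j = betas j * betas i"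
    "beta i * betas j = betas j * beta i" "K i * beta j = beta j * K i"
    "K i * betas j = betas j * K i" "K i * K j = K j * K i"
  using site_rels[OF assms(1,2)] assms(3) by simp_all

abbreviation "c0 \<equiv> emb (qf ^ 2)"
abbreviation "c1 \<equiv> emb (inverse qf ^ 2)"

lemma qinv_sq: "inverse qf ^ 2 * qf ^ 2 = 1" "qf ^ 2 * inverse qf ^ 2 = 1"
  using qf_nz by (simp_all add: field_simps)

lemma c1c0: "c1 * c0 = 1"
  by (simp add: emb_mult[symmetric] qinv_sq)

lemma c0c1: "c0 * c1 = 1"
  by (simp add: emb_mult[symmetric] qinv_sq)

lemma c1c0_pow: "c1 ^ k * c0 ^ k = 1"
proof -
  have "c1 ^ k * c0 ^ k = emb ((inverse qf ^ 2 * qf ^ 2) ^ k)"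
    by (simp only: emb_power[symmetric] emb_mult[symmetric] power_mult_distrib)
  also have "\<dots> = 1" by (simp add: qinv_sq)
  finally show ?thesis .
qed

section \<open>Site identities\<close>

context
  fixes i assumes i: "i \<in> {1..n}"
begin

lemma sb: "betas i * beta i = 1 - K i ^ 2"
proof -
  have "(beta i * betas i - c0 * betas i * beta i) - (beta i * betas i - betas i * beta i)
        = emb (1 - qf ^ 2) - emb (1 - qf ^ 2) * K i ^ 2"
    using rel_comm[OF i] rel_q[OF i] by simp
  then have "betas i * beta i - c0 * (betas i * beta i) = emb (1 - qf ^ 2) * (1 - K i ^ 2)"
    by (simp add: algebra_simps)
  then have "emb (1 - qf ^ 2) * (betas i * beta i) = emb (1 - qf ^ 2) * (1 - K i ^ 2)"
    by (simp add: emb_diff algebra_simps)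
  then have "emb (inverse (1 - qf ^ 2)) * (emb (1 - qf ^ 2) * (betas i * beta i))
        = emb (inverse (1 - qf ^ 2)) * (emb (1 - qf ^ 2) * (1 - K i ^ 2))" by simp
  moreover have "1 - qf ^ 2 \<noteq> 0" by (rule one_minus_qf_pow_nz) simp
  ultimately show ?thesis by (simp add: mult.assoc[symmetric] emb_inv)
qed

lemma bs: "beta i * betas i = 1 - c0 * K i ^ 2"
proof -
  have "beta i * betas i = betas i * beta i + emb (1 - qf ^ 2) * K i ^ 2"
    using rel_comm[OF i] by (simp add: algebra_simps)
  then show ?thesis by (simp add: sb emb_diff algebra_simps)
qed

lemma K2_betas: "K i ^ 2 * betas i = c0 * betas i * K i ^ 2"
proof -
  have "K i ^ 2 * betas i = K i * (K i * betas i)" by (simp add: power2_eq_square mult.assoc)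
  also have "\<dots> = K i * (emb qf * betas i * K i)" by (simp add: rel_K_betas[OF i])
  also have "\<dots> = emb qf * (K i * betas i) * K i" by (metis emb_central mult.assoc)
  also have "\<dots> = emb qf * emb qf * betas i * (K i * K i)" by (simp add: rel_K_betas[OF i] mult.assoc)
  finally show ?thesis by (simp add: emb_mult[symmetric] power2_eq_square)
qed

lemma betas_K2: "betas i * K i ^ 2 = c1 * K i ^ 2 * betas i"
proof -
  have "c1 * K i ^ 2 * betas i = c1 * c0 * betas i * K i ^ 2"
    by (simp add: K2_betas mult.assoc)
  then show ?thesis by (simp add: c1c0)
qed

lemma K2_beta: "K i ^ 2 * beta i = c1 * beta i * K i ^ 2"
proof -
  have "K i ^ 2 * beta i = K i * (K i * beta i)" by (simp add: power2_eq_square mult.assoc)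
  also have "\<dots> = K i * (emb (inverse qf) * beta i * K i)" by (simp add: rel_K_beta[OF i])
  also have "\<dots> = emb (inverse qf) * (K i * beta i) * K i" by (metis emb_central mult.assoc)
  also have "\<dots> = emb (inverse qf) * emb (inverse qf) * beta i * (K i * K i)" by (simp add: rel_K_beta[OF i] mult.assoc)
  finally show ?thesis by (simp add: emb_mult[symmetric] power2_eq_square)
qed

lemma beta_K2: "beta i * K i ^ 2 = c0 * K i ^ 2 * beta i"
proof -
  have "c0 * K i ^ 2 * beta i = c0 * c1 * beta i * K i ^ 2"
    by (simp add: K2_beta mult.assoc)
  then show ?thesis by (simp add: c0c1)
qed

lemma betas_pow_K2: "betas i ^ c * K i ^ 2 = c1 ^ c * K i ^ 2 * betas i ^ c"
proof (induct c)
  case (Suc c)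
  have "betas i ^ Suc c * K i ^ 2 = betas i * (betas i ^ c * K i ^ 2)"
    by (simp add: mult.assoc)
  also have "\<dots> = c1 ^ c * (betas i * K i ^ 2) * betas i ^ c"
    by (simp only: Suc mult.assoc emb_pow_left)
  also have "\<dots> = c1 ^ c * c1 * (K i ^ 2 * (betas i * betas i ^ c))"
    by (simp only: betas_K2 mult.assoc)
  also have "\<dots> = c1 ^ Suc c * K i ^ 2 * betas i ^ Suc c"
    by (simp only: power_Suc2[symmetric] power_Suc[symmetric] mult.assoc)
  finally show ?case .
qed simp

lemma beta_pow_K2: "beta i ^ c * K i ^ 2 = c0 ^ c * K i ^ 2 * beta i ^ c"
proof (induct c)
  case (Suc c)
  have "beta i ^ Suc c * K i ^ 2 = beta i * (beta i ^ c * K i ^ 2)"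
    by (simp add: mult.assoc)
  also have "\<dots> = c0 ^ c * (beta i * K i ^ 2) * beta i ^ c"
    by (simp only: Suc mult.assoc emb_pow_left)
  also have "\<dots> = c0 ^ c * c0 * (K i ^ 2 * (beta i * beta i ^ c))"
    by (simp only: beta_K2 mult.assoc)
  also have "\<dots> = c0 ^ Suc c * K i ^ 2 * beta i ^ Suc c"
    by (simp only: power_Suc2[symmetric] power_Suc[symmetric] mult.assoc)
  finally show ?case .
qed simp

lemma beta_betas_pow: "beta i * betas i ^ Suc c = betas i ^ c * (1 - c0 ^ Suc c * K i ^ 2)"
proof (induct c)
  case 0 then show ?case by (simp add: bs)
next
  case (Suc c)
  have "beta i * betas i ^ Suc (Suc c) = (beta i * betas i ^ Suc c) * betas i"
    by (simp only: power_Suc2 mult.assoc)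
  also have "\<dots> = betas i ^ c * (1 - c0 ^ Suc c * K i ^ 2) * betas i"
    by (simp only: Suc)
  also have "\<dots> = betas i ^ c * betas i - betas i ^ c * (c0 ^ Suc c * (K i ^ 2 * betas i))"
    by (simp add: algebra_simps)
  also have "\<dots> = betas i ^ c * betas i - betas i ^ c * (c0 ^ Suc c * (c0 * betas i * K i ^ 2))"
    by (simp only: K2_betas)
  also have "c0 ^ Suc c * (c0 * betas i * K i ^ 2) = c0 ^ Suc (Suc c) * (betas i * K i ^ 2)"
    by (simp only: power_Suc2 mult.assoc)
  also have "betas i ^ c * (c0 ^ Suc (Suc c) * (betas i * K i ^ 2))
      = c0 ^ Suc (Suc c) * (betas i ^ c * (betas i * K i ^ 2))"
    by (rule emb_pow_left)
  also have "\<dots> = betas i ^ Suc c * (c0 ^ Suc (Suc c) * K i ^ 2)"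
    by (subst emb_pow_left) (simp only: power_Suc2[of "betas i"] mult.assoc)
  finally show ?case by (simp only: right_diff_distrib mult_1_right power_Suc2)
qed

lemma betas_pow_beta: "betas i ^ Suc c * beta i = betas i ^ c * (1 - K i ^ 2)"
  by (simp only: power_Suc2 mult.assoc sb)

end
end



definition sp :: "nat \<Rightarrow> cq" where "sp a = (-1) ^ a / qpoch a"
definition tm :: "nat \<Rightarrow> cq" where "tm a = qf ^ (a * (a + 1)) / qpoch a"

lemma omq_nz: "1 - qf ^ (2 * Suc c) \<noteq> 0"
  by (rule one_minus_qf_pow_nz) simp

lemma sp_Suc: "sp (Suc c) = - sp c / (1 - qf ^ (2 * Suc c))"
  unfolding sp_def qpoch_Suc using qpoch_nz[of c] omq_nz[of c] by (simp add: field_simps)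

lemma tm_Suc: "tm (Suc c) = tm c * qf ^ (2 * Suc c) / (1 - qf ^ (2 * Suc c))"
proof -
  have "qf ^ (Suc c * (Suc c + 1)) = qf ^ (c * (c + 1)) * qf ^ (2 * Suc c)"
  proof -
    have "Suc c * (Suc c + 1) = c * (c + 1) + 2 * Suc c" by simp
    then show ?thesis by (simp only: power_add)
  qed
  then show ?thesis
    unfolding tm_def qpoch_Suc using qpoch_nz[of c] omq_nz[of c] by (simp add: field_simps)
qed

lemma sc1p: "sp (Suc c) + sp c = (qf ^ 2) ^ Suc c * sp (Suc c)"
proof -
  define x where "x = qf ^ (2 * Suc c)"
  have x: "1 - x \<noteq> 0" using omq_nz x_def by simp
  have e: "(qf ^ 2) ^ Suc c = x" by (simp only: x_def power_mult)
  show ?thesis unfolding e sp_Suc x_def[symmetric] using x by (simp add: field_simps)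
qed

lemma sc3p: "sp (Suc c) * (1 - (qf ^ 2) ^ Suc c) + sp c = 0"
proof -
  define x where "x = qf ^ (2 * Suc c)"
  have x: "1 - x \<noteq> 0" using omq_nz x_def by simp
  have e: "(qf ^ 2) ^ Suc c = x" by (simp only: x_def power_mult)
  show ?thesis unfolding e sp_Suc x_def[symmetric] using x by (simp add: field_simps)
qed

lemma sc1m: "tm (Suc c) + tm c = (inverse qf ^ 2) ^ Suc c * tm (Suc c)"
proof -
  define x where "x = qf ^ (2 * Suc c)"
  have x: "1 - x \<noteq> 0" using omq_nz x_def by simp
  have x0: "x \<noteq> 0" using qf_nz x_def by simp
  have e: "(inverse qf ^ 2) ^ Suc c = inverse x" by (simp only: x_def power_mult power_inverse)
  show ?thesis unfolding e tm_Suc x_def[symmetric] using x x0 by (simp add: field_simps)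
qed

lemma sc3m: "tm (Suc c) * ((qf ^ 2) ^ Suc c - 1) + tm c * (qf ^ 2) ^ Suc c = 0"
proof -
  define x where "x = qf ^ (2 * Suc c)"
  have x: "1 - x \<noteq> 0" using omq_nz x_def by simp
  have e: "(qf ^ 2) ^ Suc c = x" by (simp only: x_def power_mult)
  show ?thesis unfolding e tm_Suc x_def[symmetric] using x by (simp add: field_simps)
qed

context qb
begin

lemma ep_eq: "ellp emb beta betas i a b = emb (sp a) * (betas i ^ a * beta i ^ b)"
  by (simp add: ellp_def sp_def mult.assoc)

lemma em_eq: "ellm emb beta betas i a b = emb (tm a) * (beta i ^ b * betas i ^ a)"
  by (simp add: ellm_def tm_def mult.assoc)

context
  fixes i assumes i: "i \<in> {1..n}"
begin

lemma ss_bb: "betas i ^ Suc c * beta i ^ Suc b = betas i ^ c * ((1 - K i ^ 2) * beta i ^ b)"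
proof -
  have "betas i ^ Suc c * beta i ^ Suc b = betas i ^ c * ((betas i * beta i) * beta i ^ b)"
    by (simp only: power_Suc2[of "betas i"] power_Suc[of "beta i"] mult.assoc)
  then show ?thesis by (simp only: sb[OF i])
qed

lemma bb_ss: "beta i ^ Suc b * betas i ^ Suc c = beta i ^ b * (betas i ^ c * (1 - c0 ^ Suc c * K i ^ 2))"
proof -
  have "beta i ^ Suc b * betas i ^ Suc c = beta i ^ b * (beta i * betas i ^ Suc c)"
    by (simp only: power_Suc2[of "beta i"] mult.assoc)
  then show ?thesis by (simp only: beta_betas_pow[OF i])
qed

lemma S1p: "ellp emb beta betas i (Suc c) b + betas i * ellp emb beta betas i c b
    = c0 ^ Suc c * ellp emb beta betas i (Suc c) b"
proof -
  let ?M = "betas i ^ Suc c * beta i ^ b"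
  have "betas i * ellp emb beta betas i c b = emb (sp c) * ?M"
    by (simp only: ep_eq emb_left power_Suc mult.assoc)
  then have "ellp emb beta betas i (Suc c) b + betas i * ellp emb beta betas i c b
      = emb (sp (Suc c) + sp c) * ?M"
    by (simp add: ep_eq emb_add distrib_right)
  also have "\<dots> = emb ((qf ^ 2) ^ Suc c * sp (Suc c)) * ?M" by (simp only: sc1p)
  also have "\<dots> = c0 ^ Suc c * ellp emb beta betas i (Suc c) b"
    by (simp only: ep_eq emb_mult emb_power mult.assoc)
  finally show ?thesis .
qed

lemma S2p_aux: "ellp emb beta betas i c b - betas i * ellp emb beta betas i c (Suc b)
    = emb (sp c) * (betas i ^ c * K i ^ 2 * beta i ^ b)"
proof -
  have "betas i * ellp emb beta betas i c (Suc b) = emb (sp c) * (betas i ^ c * ((1 - K i ^ 2) * beta i ^ b))"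
  proof -
    have "betas i * (betas i ^ c * beta i ^ Suc b) = betas i ^ Suc c * beta i ^ Suc b"
      by (simp only: mult.assoc[symmetric] power_Suc)
    then show ?thesis by (simp only: ep_eq emb_left ss_bb)
  qed
  then show ?thesis
    by (simp add: ep_eq algebra_simps)
qed

lemma S2p: "ellp emb beta betas i c b - betas i * ellp emb beta betas i c (Suc b)
    = K i ^ 2 * (c1 ^ c * ellp emb beta betas i c b)"
proof -
  have "betas i * ellp emb beta betas i c (Suc b) = emb (sp c) * (betas i ^ c * ((1 - K i ^ 2) * beta i ^ b))"
  proof -
    have "betas i * (betas i ^ c * beta i ^ Suc b) = betas i ^ Suc c * beta i ^ Suc b"
      by (simp only: mult.assoc[symmetric] power_Suc)
    then show ?thesis by (simp only: ep_eq emb_left ss_bb)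
  qed
  then have "ellp emb beta betas i c b - betas i * ellp emb beta betas i c (Suc b)
      = emb (sp c) * (betas i ^ c * K i ^ 2 * beta i ^ b)"
    by (simp add: ep_eq algebra_simps)
  also have "\<dots> = emb (sp c) * (c1 ^ c * (K i ^ 2 * (betas i ^ c * beta i ^ b)))"
    by (simp only: betas_pow_K2[OF i] mult.assoc)
  also have "\<dots> = K i ^ 2 * (c1 ^ c * ellp emb beta betas i c b)"
    by (simp only: ep_eq emb_pow_left[of "K i ^ 2"] emb_left[of "K i ^ 2"] emb_pow_left[of "emb (sp c)"])
  finally show ?thesis .
qed

lemma S3p0: "beta i * ellp emb beta betas i 0 b - ellp emb beta betas i 0 (Suc b) = 0"
  by (simp add: ep_eq sp_def)

lemma S3p: "beta i * ellp emb beta betas i (Suc c) b - ellp emb beta betas i (Suc c) (Suc b)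
    + (ellp emb beta betas i c b - betas i * ellp emb beta betas i c (Suc b)) = 0"
proof -
  let ?M = "betas i ^ c * (K i ^ 2 * beta i ^ b)"
  have a: "beta i * ellp emb beta betas i (Suc c) b = emb (sp (Suc c)) * (betas i ^ c * ((1 - c0 ^ Suc c * K i ^ 2) * beta i ^ b))"
  proof -
    have "beta i * (betas i ^ Suc c * beta i ^ b) = (beta i * betas i ^ Suc c) * beta i ^ b"
      by (simp only: mult.assoc)
    then show ?thesis by (simp only: ep_eq emb_left beta_betas_pow[OF i] mult.assoc)
  qed
  have b: "ellp emb beta betas i (Suc c) (Suc b) = emb (sp (Suc c)) * (betas i ^ c * ((1 - K i ^ 2) * beta i ^ b))"
    by (simp only: ep_eq ss_bb)
  have "betas i ^ c * ((1 - c0 ^ Suc c * K i ^ 2) * beta i ^ b) - betas i ^ c * ((1 - K i ^ 2) * beta i ^ b)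
      = betas i ^ c * (K i ^ 2 * beta i ^ b) - betas i ^ c * (c0 ^ Suc c * (K i ^ 2 * beta i ^ b))"
    by (simp add: algebra_simps)
  also have "\<dots> = (1 - c0 ^ Suc c) * ?M"
    by (simp only: emb_pow_left[of "betas i ^ c"] left_diff_distrib mult_1_left)
  finally have d: "betas i ^ c * ((1 - c0 ^ Suc c * K i ^ 2) * beta i ^ b) - betas i ^ c * ((1 - K i ^ 2) * beta i ^ b)
      = (1 - c0 ^ Suc c) * ?M" .
  have e: "emb (sp (Suc c) * (1 - (qf ^ 2) ^ Suc c)) * ?M = emb (sp (Suc c)) * ((1 - c0 ^ Suc c) * ?M)"
    by (simp only: emb_mult emb_diff emb_1 emb_power mult.assoc)
  have ab: "beta i * ellp emb beta betas i (Suc c) b - ellp emb beta betas i (Suc c) (Suc b)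
      = emb (sp (Suc c) * (1 - (qf ^ 2) ^ Suc c)) * ?M"
    by (simp only: a b e d[symmetric] right_diff_distrib[of "emb (sp (Suc c))"])
  have cc: "ellp emb beta betas i c b - betas i * ellp emb beta betas i c (Suc b) = emb (sp c) * ?M"
    by (simp only: S2p_aux mult.assoc)
  have "emb (sp (Suc c) * (1 - (qf ^ 2) ^ Suc c)) * ?M + emb (sp c) * ?M
      = emb (sp (Suc c) * (1 - (qf ^ 2) ^ Suc c) + sp c) * ?M"
    by (simp only: emb_add distrib_right)
  then show ?thesis by (simp only: ab cc sc3p emb_0 mult_zero_left)
qed

lemma em_betas: "ellm emb beta betas i c b * betas i = emb (tm c) * (beta i ^ b * betas i ^ Suc c)"
  by (simp only: em_eq mult.assoc power_Suc2)

lemma em_Sb: "ellm emb beta betas i c (Suc b) * betas i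
    = emb (tm c) * (beta i ^ b * (betas i ^ c * (1 - c0 ^ Suc c * K i ^ 2)))"
  by (simp only: em_betas bb_ss)

lemma S1m: "ellm emb beta betas i (Suc c) b + ellm emb beta betas i c b * betas i
    = c1 ^ Suc c * ellm emb beta betas i (Suc c) b"
proof -
  let ?M = "beta i ^ b * betas i ^ Suc c"
  have "ellm emb beta betas i (Suc c) b + ellm emb beta betas i c b * betas i
      = emb (tm (Suc c) + tm c) * ?M"
    unfolding em_betas by (simp only: em_eq emb_add distrib_right)
  also have "\<dots> = emb ((inverse qf ^ 2) ^ Suc c * tm (Suc c)) * ?M" by (simp only: sc1m)
  also have "\<dots> = c1 ^ Suc c * ellm emb beta betas i (Suc c) b"
    by (simp only: em_eq emb_mult emb_power mult.assoc)
  finally show ?thesis .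
qed

lemma S2m_aux: "ellm emb beta betas i c b - ellm emb beta betas i c (Suc b) * betas i
    = emb (tm c * (qf ^ 2) ^ Suc c) * (beta i ^ b * (betas i ^ c * K i ^ 2))"
proof -
  have "beta i ^ b * betas i ^ c - beta i ^ b * (betas i ^ c * (1 - c0 ^ Suc c * K i ^ 2))
      = beta i ^ b * (betas i ^ c * (c0 ^ Suc c * K i ^ 2))"
  proof -
    have "betas i ^ c - betas i ^ c * (1 - c0 ^ Suc c * K i ^ 2) = betas i ^ c * (c0 ^ Suc c * K i ^ 2)"
      by (simp add: right_diff_distrib)
    then show ?thesis by (simp only: right_diff_distrib[of "beta i ^ b", symmetric])
  qed
  also have "\<dots> = c0 ^ Suc c * (beta i ^ b * (betas i ^ c * K i ^ 2))"
    by (simp only: emb_pow_left[of "betas i ^ c"] emb_pow_left[of "beta i ^ b"])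
  finally have d: "beta i ^ b * betas i ^ c - beta i ^ b * (betas i ^ c * (1 - c0 ^ Suc c * K i ^ 2))
      = c0 ^ Suc c * (beta i ^ b * (betas i ^ c * K i ^ 2))" .
  show ?thesis
    apply (subst em_Sb)
    apply (simp only: em_eq right_diff_distrib[of "emb (tm c)", symmetric] d)
    by (simp only: emb_mult emb_power[of "qf ^ 2"] mult.assoc)
qed

lemma KK_move: "beta i ^ b * (betas i ^ c * K i ^ 2)
    = emb ((inverse qf ^ 2) ^ c * (qf ^ 2) ^ b) * (K i ^ 2 * (beta i ^ b * betas i ^ c))"
proof -
  have "beta i ^ b * (betas i ^ c * K i ^ 2) = beta i ^ b * (c1 ^ c * (K i ^ 2 * betas i ^ c))"
    by (simp only: betas_pow_K2[OF i] mult.assoc)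
  also have "\<dots> = c1 ^ c * ((beta i ^ b * K i ^ 2) * betas i ^ c)"
    by (simp only: emb_pow_left[of "beta i ^ b"] mult.assoc)
  also have "\<dots> = c1 ^ c * (c0 ^ b * (K i ^ 2 * (beta i ^ b * betas i ^ c)))"
    by (simp only: beta_pow_K2[OF i] mult.assoc)
  also have "\<dots> = emb ((inverse qf ^ 2) ^ c * (qf ^ 2) ^ b) * (K i ^ 2 * (beta i ^ b * betas i ^ c))"
    by (simp only: emb_mult emb_power mult.assoc)
  finally show ?thesis .
qed

lemma S2m: "ellm emb beta betas i c b - ellm emb beta betas i c (Suc b) * betas i
    = c0 ^ Suc b * (K i ^ 2 * ellm emb beta betas i c b)"
proof -
  have sc: "tm c * (qf ^ 2) ^ Suc c * ((inverse qf ^ 2) ^ c * (qf ^ 2) ^ b) = (qf ^ 2) ^ Suc b * tm c"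
  proof -
    have "(inverse qf ^ 2) ^ c * (qf ^ 2) ^ c = 1"
      using power_mult_distrib[of "inverse qf ^ 2" "qf ^ 2" c] qinv_sq(1) by simp
    then show ?thesis by (simp add: algebra_simps)
  qed
  have "ellm emb beta betas i c b - ellm emb beta betas i c (Suc b) * betas i
      = emb (tm c * (qf ^ 2) ^ Suc c) * (emb ((inverse qf ^ 2) ^ c * (qf ^ 2) ^ b) * (K i ^ 2 * (beta i ^ b * betas i ^ c)))"
    by (simp only: S2m_aux KK_move)
  also have "\<dots> = emb ((qf ^ 2) ^ Suc b * tm c) * (K i ^ 2 * (beta i ^ b * betas i ^ c))"
    by (simp only: sc[symmetric]) (simp only: emb_mult mult.assoc)
  also have "\<dots> = c0 ^ Suc b * (K i ^ 2 * ellm emb beta betas i c b)"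
    by (simp only: em_eq emb_mult emb_power mult.assoc emb_left[of "K i ^ 2"])
  finally show ?thesis .
qed

lemma S3m0: "ellm emb beta betas i 0 b * beta i - ellm emb beta betas i 0 (Suc b) = 0"
  by (simp add: em_eq tm_def power_Suc2 power_commutes)

lemma S3m: "ellm emb beta betas i (Suc c) b * beta i - ellm emb beta betas i (Suc c) (Suc b)
    + (ellm emb beta betas i c b - ellm emb beta betas i c (Suc b) * betas i) = 0"
proof -
  let ?N = "beta i ^ b * (betas i ^ c * K i ^ 2)"
  have a: "ellm emb beta betas i (Suc c) b * beta i = emb (tm (Suc c)) * (beta i ^ b * (betas i ^ c * (1 - K i ^ 2)))"
    by (simp only: em_eq mult.assoc betas_pow_beta[OF i])
  have b: "ellm emb beta betas i (Suc c) (Suc b) = emb (tm (Suc c)) * (beta i ^ b * (betas i ^ c * (1 - c0 ^ Suc c * K i ^ 2)))"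
    by (simp only: em_eq bb_ss)
  have "beta i ^ b * (betas i ^ c * (1 - K i ^ 2)) - beta i ^ b * (betas i ^ c * (1 - c0 ^ Suc c * K i ^ 2))
      = beta i ^ b * (betas i ^ c * (c0 ^ Suc c * K i ^ 2)) - ?N"
    by (simp add: algebra_simps)
  also have "\<dots> = (c0 ^ Suc c - 1) * ?N"
    by (simp only: emb_pow_left[of "betas i ^ c"] emb_pow_left[of "beta i ^ b"] left_diff_distrib mult_1_left)
  finally have d: "beta i ^ b * (betas i ^ c * (1 - K i ^ 2)) - beta i ^ b * (betas i ^ c * (1 - c0 ^ Suc c * K i ^ 2))
      = (c0 ^ Suc c - 1) * ?N" .
  have e: "emb (tm (Suc c) * ((qf ^ 2) ^ Suc c - 1)) * ?N = emb (tm (Suc c)) * ((c0 ^ Suc c - 1) * ?N)"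
    by (simp only: emb_mult emb_diff emb_1 emb_power mult.assoc)
  have ab: "ellm emb beta betas i (Suc c) b * beta i - ellm emb beta betas i (Suc c) (Suc b)
      = emb (tm (Suc c) * ((qf ^ 2) ^ Suc c - 1)) * ?N"
    by (simp only: a b e d[symmetric] right_diff_distrib[of "emb (tm (Suc c))"])
  have "emb (tm (Suc c) * ((qf ^ 2) ^ Suc c - 1)) * ?N + emb (tm c * (qf ^ 2) ^ Suc c) * ?N
      = emb (tm (Suc c) * ((qf ^ 2) ^ Suc c - 1) + tm c * (qf ^ 2) ^ Suc c) * ?N"
    by (simp only: emb_add distrib_right)
  then show ?thesis by (simp only: ab S2m_aux sc3m emb_0 mult_zero_left)
qed

end
end



lemma pr_add: "pr (\<lambda>a. f a + g a) a = pr f a + pr g a"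
  by (simp add: pr_def)
lemma pr_diff: "pr (\<lambda>a. f a - g a) a = pr f a - pr g a"
  by (simp add: pr_def)
lemma pr_mult_right: "pr (\<lambda>a. f a * X) a = pr f a * X"
  by (simp add: pr_def)
lemma pr_mult_left': "F c * pr g c = pr (\<lambda>c. F (Suc c) * g c) c"
  by (simp add: pr_def)

lemma step_lemma:
  fixes Waa Wab Wba Wbb Gaa Gab Gba Gbb P R A B :: "nat \<Rightarrow> nat \<Rightarrow> 'a::ring_1 fps"
  assumes w1: "\<And>a c. Waa a c + pr (\<lambda>a. Wba a c) a = P a c"
    and w2: "\<And>a c. Wbb a c - Wba a (Suc c) = R a c"
    and w3: "\<And>a c. Wab a c - Waa a (Suc c) + pr (\<lambda>a. Wbb a c) a - pr (\<lambda>a. Wba a (Suc c)) a = 0"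
    and g1: "\<And>c b. Gaa c b + pr (\<lambda>c. Gba c b) c = A c b"
    and g2: "\<And>c b. Gbb c b - Gba c (Suc b) = B c b"
    and g3: "\<And>c b. Gab c b - Gaa c (Suc b) + pr (\<lambda>c. Gbb c b) c - pr (\<lambda>c. Gba c (Suc b)) c = 0"
    and v00: "\<And>c b. vanish c (Gaa c b)" and v01: "\<And>c b. vanish c (Gab c b)"
    and v10: "\<And>c b. vanish (Suc c) (Gba c b)" and v11: "\<And>c b. vanish (Suc c) (Gbb c b)"
  defines "Vaa \<equiv> \<lambda>a b. isum (\<lambda>c. Waa a c * Gaa c b + Wab a c * Gba c b)"
    and "Vab \<equiv> \<lambda>a b. isum (\<lambda>c. Waa a c * Gab c b + Wab a c * Gbb c b)"
    and "Vba \<equiv> \<lambda>a b. isum (\<lambda>c. Wba a c * Gaa c b + Wbb a c * Gba c b)"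
    and "Vbb \<equiv> \<lambda>a b. isum (\<lambda>c. Wba a c * Gab c b + Wbb a c * Gbb c b)"
    and "PP \<equiv> \<lambda>a b. isum (\<lambda>c. P a c * A c b)"
    and "RR \<equiv> \<lambda>a b. isum (\<lambda>c. R a c * B c b)"
  shows "Vaa a b + pr (\<lambda>a. Vba a b) a = PP a b"
    and "Vbb a b - Vba a (Suc b) = RR a b"
    and "Vab a b - Vaa a (Suc b) + pr (\<lambda>a. Vbb a b) a - pr (\<lambda>a. Vba a (Suc b)) a = 0"
proof -
  have Pw: "P a (Suc c) = Wab a c + pr (\<lambda>a. Wbb a c) a" for a c
    using w1[of a "Suc c"] w3[of a c] by (simp add: algebra_simps)
  have Bg: "- pr (\<lambda>c. B c b) c = Gab c b - Gaa c (Suc b)" for c b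
  proof (cases c)
    case 0 then show ?thesis using g3[of c b] by (simp add: pr_def algebra_simps)
  next
    case (Suc c') then show ?thesis using g3[of c b] g2[of c' b]
      by (simp add: pr_def algebra_simps)
  qed
  {
    define h where "h c = P a (Suc c) * Gba c b" for c
    have vh: "vanish (Suc c) (h c)" for c unfolding h_def by (rule vanish_mult_left[OF v10])
    have D: "(Waa a c * Gaa c b + Wab a c * Gba c b) + (pr (\<lambda>a. Wba a c) a * Gaa c b + pr (\<lambda>a. Wbb a c) a * Gba c b)
        - P a c * A c b = h c - pr h c" for c
    proof -
      have "(Waa a c * Gaa c b + Wab a c * Gba c b) + (pr (\<lambda>a. Wba a c) a * Gaa c b + pr (\<lambda>a. Wbb a c) a * Gba c b)
        - (Waa a c + pr (\<lambda>a. Wba a c) a) * (Gaa c b + pr (\<lambda>c. Gba c b) c)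
        = (Wab a c + pr (\<lambda>a. Wbb a c) a) * Gba c b - (Waa a c + pr (\<lambda>a. Wba a c) a) * pr (\<lambda>c. Gba c b) c"
        by (simp add: algebra_simps)
      then show ?thesis unfolding h_def w1 g1 Pw[symmetric] pr_mult_left' .
    qed
    have "Vaa a b + pr (\<lambda>a. Vba a b) a - PP a b
       = isum (\<lambda>c. (Waa a c * Gaa c b + Wab a c * Gba c b) + (pr (\<lambda>a. Wba a c) a * Gaa c b + pr (\<lambda>a. Wbb a c) a * Gba c b)
        - P a c * A c b)"
      unfolding Vaa_def Vba_def PP_def pr_isum isum_add isum_diff pr_add pr_mult_right ..
    also have "\<dots> = 0" unfolding D by (rule isum_telescope[OF vh])
    finally show "Vaa a b + pr (\<lambda>a. Vba a b) a = PP a b" by simp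
  }
  {
    define h where "h c = Wba a (Suc c) * B c b" for c
    have vh: "vanish (Suc c) (h c)" for c unfolding h_def
      using g2[of c b] by (metis vanish_mult_left vanish_diff v10 v11)
    have D: "(Wba a c * Gab c b + Wbb a c * Gbb c b) - (Wba a c * Gaa c (Suc b) + Wbb a c * Gba c (Suc b))
        - R a c * B c b = h c - pr h c" for c
    proof -
      have "(Wba a c * Gab c b + Wbb a c * Gbb c b) - (Wba a c * Gaa c (Suc b) + Wbb a c * Gba c (Suc b))
        - (Wbb a c - Wba a (Suc c)) * (Gbb c b - Gba c (Suc b))
        = Wba a (Suc c) * (Gbb c b - Gba c (Suc b)) - Wba a c * (- (Gab c b - Gaa c (Suc b)))"
        by (simp add: algebra_simps)
      then show ?thesis unfolding h_def w2 g2 Bg[symmetric] minus_minus pr_mult_left' .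
    qed
    have "Vbb a b - Vba a (Suc b) - RR a b
       = isum (\<lambda>c. (Wba a c * Gab c b + Wbb a c * Gbb c b) - (Wba a c * Gaa c (Suc b) + Wbb a c * Gba c (Suc b))
        - R a c * B c b)"
      unfolding Vbb_def Vba_def RR_def isum_diff ..
    also have "\<dots> = 0" unfolding D by (rule isum_telescope[OF vh])
    finally show "Vbb a b - Vba a (Suc b) = RR a b" by simp
  }
  {
    define h where "h c = P a (Suc c) * B c b" for c
    have vh: "vanish (Suc c) (h c)" for c unfolding h_def
      using g2[of c b] by (metis vanish_mult_left vanish_diff v10 v11)
    have D: "(Waa a c * Gab c b + Wab a c * Gbb c b) - (Waa a c * Gaa c (Suc b) + Wab a c * Gba c (Suc b))
        + (pr (\<lambda>a. Wba a c) a * Gab c b + pr (\<lambda>a. Wbb a c) a * Gbb c b)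
        - (pr (\<lambda>a. Wba a c) a * Gaa c (Suc b) + pr (\<lambda>a. Wbb a c) a * Gba c (Suc b))
        = h c - pr h c" for c
    proof -
      have "(Waa a c * Gab c b + Wab a c * Gbb c b) - (Waa a c * Gaa c (Suc b) + Wab a c * Gba c (Suc b))
        + (pr (\<lambda>a. Wba a c) a * Gab c b + pr (\<lambda>a. Wbb a c) a * Gbb c b)
        - (pr (\<lambda>a. Wba a c) a * Gaa c (Suc b) + pr (\<lambda>a. Wbb a c) a * Gba c (Suc b))
        = (Wab a c + pr (\<lambda>a. Wbb a c) a) * (Gbb c b - Gba c (Suc b))
          - (Waa a c + pr (\<lambda>a. Wba a c) a) * (- (Gab c b - Gaa c (Suc b)))"
        by (simp add: algebra_simps)
      then show ?thesis unfolding h_def w1 g2 Bg[symmetric] minus_minus Pw[symmetric] pr_mult_left' .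
    qed
    have "Vab a b - Vaa a (Suc b) + pr (\<lambda>a. Vbb a b) a - pr (\<lambda>a. Vba a (Suc b)) a
       = isum (\<lambda>c. (Waa a c * Gab c b + Wab a c * Gbb c b) - (Waa a c * Gaa c (Suc b) + Wab a c * Gba c (Suc b))
        + (pr (\<lambda>a. Wba a c) a * Gab c b + pr (\<lambda>a. Wbb a c) a * Gbb c b)
        - (pr (\<lambda>a. Wba a c) a * Gaa c (Suc b) + pr (\<lambda>a. Wbb a c) a * Gba c (Suc b)))"
      unfolding Vaa_def Vab_def Vba_def Vbb_def pr_isum isum_add isum_diff pr_add pr_mult_right ..
    also have "\<dots> = 0" unfolding D by (rule isum_telescope[OF vh])
    finally show "Vab a b - Vaa a (Suc b) + pr (\<lambda>a. Vbb a b) a - pr (\<lambda>a. Vba a (Suc b)) a = 0" .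
  }
qed




context qb
begin

inductive_set sub :: "nat set \<Rightarrow> 'a set" for S :: "nat set" where
  s_emb: "emb c \<in> sub S"
| s_beta: "i \<in> S \<Longrightarrow> beta i \<in> sub S"
| s_betas: "i \<in> S \<Longrightarrow> betas i \<in> sub S"
| s_K: "i \<in> S \<Longrightarrow> K i \<in> sub S"
| s_add: "x \<in> sub S \<Longrightarrow> y \<in> sub S \<Longrightarrow> x + y \<in> sub S"
| s_mult: "x \<in> sub S \<Longrightarrow> y \<in> sub S \<Longrightarrow> x * y \<in> sub S"
| s_uminus: "x \<in> sub S \<Longrightarrow> - x \<in> sub S"

lemma s_0: "0 \<in> sub S" using s_emb[of 0 S] by simp
lemma s_1: "1 \<in> sub S" using s_emb[of 1 S] by simp
lemma s_diff: "x \<in> sub S \<Longrightarrow> y \<in> sub S \<Longrightarrow> x - y \<in> sub S"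
  unfolding diff_conv_add_uminus by (intro s_add s_uminus)
lemma s_power: "x \<in> sub S \<Longrightarrow> x ^ k \<in> sub S"
  by (induct k) (auto intro: s_1 s_mult)
lemma s_sum: "(\<And>x. x \<in> A \<Longrightarrow> f x \<in> sub S) \<Longrightarrow> sum f A \<in> sub S"
  by (induct A rule: infinite_finite_induct) (auto intro: s_0 s_add)
lemma s_mono: "x \<in> sub S \<Longrightarrow> S \<subseteq> T \<Longrightarrow> x \<in> sub T"
  by (induct rule: sub.induct) (auto intro: sub.intros)

lemma gen_comm:
  assumes "i \<in> {1..n}" "j \<in> {1..n}" "i \<noteq> j"
    and "g \<in> {beta i, betas i, K i}" "h \<in> {beta j, betas j, K j}"
  shows "g * h = h * g"
  using assms rel_diff[OF assms(1,2,3)] rel_diff[OF assms(2,1) assms(3)[symmetric]]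
  by auto

lemma gen_comm_sub:
  assumes S: "S \<subseteq> {1..n}" and j: "j \<in> {1..n}" "j \<notin> S"
    and h: "h \<in> {beta j, betas j, K j}" and x: "x \<in> sub S"
  shows "x * h = h * x"
  using x
proof (induct rule: sub.induct)
  case (s_emb c) then show ?case by (rule emb_central)
next
  case (s_beta i)
  then have "i \<in> {1..n}" "i \<noteq> j" using S j by auto
  then show ?case using gen_comm[of i j "beta i" h] j h by auto
next
  case (s_betas i)
  then have "i \<in> {1..n}" "i \<noteq> j" using S j by auto
  then show ?case using gen_comm[of i j "betas i" h] j h by auto
next
  case (s_K i)
  then have "i \<in> {1..n}" "i \<noteq> j" using S j by auto
  then show ?case using gen_comm[of i j "K i" h] j h by auto
next
  case (s_add x y) then show ?case by (simp add: algebra_simps)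
next
  case (s_mult x y) then show ?case by (metis mult.assoc)
next
  case (s_uminus x) then show ?case by simp
qed

lemma sub_comm:
  assumes S: "S \<subseteq> {1..n}" and T: "T \<subseteq> {1..n}" and ST: "S \<inter> T = {}"
    and x: "x \<in> sub S" and y: "y \<in> sub T"
  shows "x * y = y * x"
  using y
proof (induct rule: sub.induct)
  case (s_emb c) then show ?case by (rule emb_central[symmetric])
next
  case (s_beta i)
  then have "i \<in> {1..n}" "i \<notin> S" using T ST by auto
  then show ?case using gen_comm_sub[OF S, of i "beta i" x] x by auto
next
  case (s_betas i)
  then have "i \<in> {1..n}" "i \<notin> S" using T ST by auto
  then show ?case using gen_comm_sub[OF S, of i "betas i" x] x by auto
next
  case (s_K i)
  then have "i \<in> {1..n}" "i \<notin> S" using T ST by auto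
  then show ?case using gen_comm_sub[OF S, of i "K i" x] x by auto
next
  case (s_add u v) then show ?case by (simp add: algebra_simps)
next
  case (s_mult u v) then show ?case by (metis mult.assoc)
next
  case (s_uminus u) then show ?case by simp
qed

definition fsub :: "nat set \<Rightarrow> 'a fps \<Rightarrow> bool" where
  "fsub S F \<longleftrightarrow> (\<forall>k. F $ k \<in> sub S)"

lemma fsub_add: "fsub S F \<Longrightarrow> fsub S G \<Longrightarrow> fsub S (F + G)"
  by (simp add: fsub_def s_add)
lemma fsub_diff: "fsub S F \<Longrightarrow> fsub S G \<Longrightarrow> fsub S (F - G)"
  by (simp add: fsub_def s_diff)
lemma fsub_mult: "fsub S F \<Longrightarrow> fsub S G \<Longrightarrow> fsub S (F * G)"
  by (simp add: fsub_def fps_mult_nth s_sum s_mult)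
lemma fsub_const: "x \<in> sub S \<Longrightarrow> fsub S (fps_const x)"
  by (simp add: fsub_def s_0)
lemma fsub_X: "fsub S fps_X"
  by (simp add: fsub_def s_0 s_1)
lemma fsub_X_power: "fsub S (fps_X ^ k)"
  by (simp add: fsub_def s_0 s_1)
lemma fsub_1: "fsub S 1" using fsub_const[OF s_1] by simp
lemma fsub_0: "fsub S 0" using fsub_const[OF s_0] by simp
lemma fsub_isum: "(\<And>c. fsub S (f c)) \<Longrightarrow> fsub S (isum f)"
  by (simp add: fsub_def isum_nth s_sum)
lemma fsub_scale: "fsub S F \<Longrightarrow> fsub S (fps_scale (emb c) F)"
  by (simp add: fsub_def fps_scale_def s_mult s_power s_emb)
lemma fsub_mono: "e \<in> sub S \<Longrightarrow> fsub S (mnm e d)"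
  by (simp add: fsub_def mono_nth s_0)
lemma fsub_pr: "(\<And>c. fsub S (f c)) \<Longrightarrow> fsub S (pr f c)"
  by (simp add: pr_def fsub_0)
lemma fsub_subset: "fsub S F \<Longrightarrow> S \<subseteq> T \<Longrightarrow> fsub T F"
  unfolding fsub_def using s_mono by blast

lemma fsub_comm:
  assumes S: "S \<subseteq> {1..n}" and T: "T \<subseteq> {1..n}" and ST: "S \<inter> T = {}"
    and F: "fsub S F" and G: "fsub T G"
  shows "F * G = G * F"
proof (rule fps_ext)
  fix k
  have "(F * G) $ k = (\<Sum>i=0..k. F $ i * G $ (k - i))" by (simp add: fps_mult_nth)
  also have "\<dots> = (\<Sum>i=0..k. G $ (k - i) * F $ i)"
    using sub_comm[OF S T ST] F G unfolding fsub_def by (intro sum.cong) auto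
  also have "\<dots> = (\<Sum>i=0..k. G $ i * F $ (k - i))"
    by (subst sum.atLeastAtMost_rev) (rule sum.cong, auto)
  finally show "(F * G) $ k = (G * F) $ k" by (simp add: fps_mult_nth)
qed

lemma ellp_sub: "ellp emb beta betas i a b \<in> sub {i}"
  by (simp add: ellp_def s_mult s_power s_emb s_beta s_betas)
lemma ellm_sub: "ellm emb beta betas i a b \<in> sub {i}"
  by (simp add: ellm_def s_mult s_power s_emb s_beta s_betas)

lemma z_fps_comm: "fps_const (z ^ k) * F = F * fps_const (z ^ k)"
  by (rule fps_ext) (simp only: fps_mult_left_const_nth fps_mult_right_const_nth z_power_central)

lemma emb_fps_comm: "fps_const (emb c) * F = F * fps_const (emb c)"
  by (rule fps_ext) (simp only: fps_mult_left_const_nth fps_mult_right_const_nth emb_central)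

end



fun Qo :: "(nat \<Rightarrow> nat \<Rightarrow> nat \<Rightarrow> 'a::ring_1) \<Rightarrow> nat \<Rightarrow> nat \<Rightarrow> nat \<Rightarrow> 'a fps" where
  "Qo ell 0 a b = (if a = b then 1 else 0)"
| "Qo ell (Suc j) a b = isum (\<lambda>c. Qo ell j a c * mnm (ell (Suc j) c b) c)"

definition tO :: "nat \<Rightarrow> nat \<Rightarrow> nat \<Rightarrow> nat \<Rightarrow> (nat \<Rightarrow> nat) set" where
  "tO j a b k = {m. m (Suc 0) = a \<and> m (Suc j) = b \<and> (\<forall>i. i \<notin> {1..Suc j} \<longrightarrow> m i = 0) \<and> (\<Sum>i\<in>{1..j}. m i) = k}"

lemma mult_mono_nth: "(F * mnm e d) $ k = (if k < d then 0 else F $ (k - d) * e)"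
proof -
  have "F * mnm e d = (F * fps_const e) * fps_X ^ d" by (simp add: mnm_def mult.assoc)
  then show ?thesis by (simp add: fps_X_power_mult_right_nth)
qed

lemma tO_0: "tO 0 a b k = (if a = b \<and> k = 0 then {\<lambda>i. if i = 1 then a else 0} else {})"
  unfolding tO_def by (auto simp: fun_eq_iff)

lemma Qo_nth:
  "finite (tO j a b k) \<and>
   Qo ell j a b $ k = (\<Sum>m\<in>tO j a b k. prod_list (map (\<lambda>i. ell i (m i) (m (Suc i))) [1..<Suc j]))"
proof (induct j arbitrary: b k)
  case 0
  show ?case by (simp add: tO_0)
next
  case (Suc j)
  let ?f = "\<lambda>j m. prod_list (map (\<lambda>i. ell i (m i) (m (Suc i))) [1..<Suc j])"
  define S where "S = Sigma {..k} (\<lambda>c. tO j a c (k - c))"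
  define emb where "emb = (\<lambda>(c::nat, m::nat \<Rightarrow> nat). m(Suc (Suc j) := b))"
  define prj where "prj = (\<lambda>m::nat \<Rightarrow> nat. (m (Suc j), m(Suc (Suc j) := 0)))"
  have finS: "finite S" unfolding S_def using Suc by (auto intro!: finite_SigmaI)
  have in1: "emb x \<in> tO (Suc j) a b k" if "x \<in> S" for x
  proof -
    obtain c m where x: "x = (c, m)" "c \<le> k" "m \<in> tO j a c (k - c)"
      using \<open>x \<in> S\<close> unfolding S_def by auto
    have "(\<Sum>i\<in>{1..Suc j}. (m(Suc (Suc j) := b)) i) = (\<Sum>i\<in>{1..j}. m i) + m (Suc j)"
      by (simp add: sum.atLeast1_atMost_eq)
    then show ?thesis using x unfolding emb_def tO_def by auto
  qed
  have in2: "prj y \<in> S" if "y \<in> tO (Suc j) a b k" for y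
  proof -
    have y: "y (Suc 0) = a" "y (Suc (Suc j)) = b" "\<And>i. i \<notin> {1..Suc (Suc j)} \<Longrightarrow> y i = 0"
      "(\<Sum>i\<in>{1..Suc j}. y i) = k" using that unfolding tO_def by auto
    have s: "(\<Sum>i\<in>{1..Suc j}. y i) = (\<Sum>i\<in>{1..j}. y i) + y (Suc j)" by simp
    have "(\<Sum>i\<in>{1..j}. (y(Suc (Suc j) := 0)) i) = (\<Sum>i\<in>{1..j}. y i)" by (rule sum.cong) auto
    then show ?thesis using y s unfolding prj_def S_def tO_def by auto
  qed
  have inv1: "prj (emb x) = x" if "x \<in> S" for x
    using that unfolding S_def emb_def prj_def tO_def by (auto simp: fun_eq_iff)
  have inv2: "emb (prj y) = y" if "y \<in> tO (Suc j) a b k" for y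
    using that unfolding emb_def prj_def tO_def by (auto simp: fun_eq_iff)
  have fin: "finite (tO (Suc j) a b k)"
  proof -
    have "tO (Suc j) a b k = emb ` S" using in2 inv2 in1 by (auto simp: image_iff) (metis)
    then show ?thesis using finS by simp
  qed
  have "Qo ell (Suc j) a b $ k = (\<Sum>c\<le>k. Qo ell j a c $ (k - c) * ell (Suc j) c b)"
    by (simp add: isum_nth mult_mono_nth)
  also have "\<dots> = (\<Sum>c\<le>k. \<Sum>m\<in>tO j a c (k - c). ?f j m * ell (Suc j) c b)"
    using Suc by (simp add: sum_distrib_right)
  also have "\<dots> = (\<Sum>x\<in>S. ?f j (snd x) * ell (Suc j) (fst x) b)"
    unfolding S_def using Suc by (subst sum.Sigma) (auto simp: split_beta)
  also have "\<dots> = (\<Sum>m\<in>tO (Suc j) a b k. ?f (Suc j) m)"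
  proof (rule sum.reindex_bij_witness[where i=prj and j=emb])
    fix x assume x: "x \<in> S"
    obtain c m where xm: "x = (c, m)" "m \<in> tO j a c (k - c)"
      using x unfolding S_def by auto
    have "?f j m = ?f j (m(Suc (Suc j) := b))"
      by (rule arg_cong[where f=prod_list], rule map_cong) auto
    moreover have "m (Suc j) = c" using xm unfolding tO_def by auto
    ultimately show "?f (Suc j) (emb x) = ?f j (snd x) * ell (Suc j) (fst x) b"
      using xm unfolding emb_def by simp
  qed (use in1 in2 inv1 inv2 in auto)
  finally show ?case using fin by simp
qed

lemma Qop_eq:
  assumes n: "n \<ge> 1"
  shows "Qop n ell z = isum (\<lambda>a. fps_const (z ^ a) * Qo ell n a a)"
proof (rule fps_ext)
  fix k
  let ?f = "\<lambda>m. prod_list (map (\<lambda>i. ell i (m i) (m (Suc i))) [1..<Suc n])"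
  let ?g = "\<lambda>m. z ^ m 1 * prod_list (map (\<lambda>i. ell i (m i) (m (cnext n i))) [1..<n+1])"
  define S where "S = Sigma {..k} (\<lambda>a. tO n a a k)"
  define prj where "prj = (\<lambda>m::nat \<Rightarrow> nat. (m 1, m(Suc n := m 1)))"
  define emb where "emb = (\<lambda>(a::nat, m::nat \<Rightarrow> nat). m(Suc n := 0))"
  have q: "\<And>a. Qo ell n a a $ k = (\<Sum>m\<in>tO n a a k. ?f m)" using Qo_nth by blast
  have "isum (\<lambda>a. fps_const (z ^ a) * Qo ell n a a) $ k = (\<Sum>a\<le>k. z ^ a * Qo ell n a a $ k)"
    by (simp only: isum_nth fps_mult_left_const_nth)
  also have "\<dots> = (\<Sum>a\<le>k. \<Sum>m\<in>tO n a a k. z ^ a * ?f m)"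
    by (simp only: q sum_distrib_left)
  also have "\<dots> = (\<Sum>x\<in>S. z ^ fst x * ?f (snd x))"
    unfolding S_def using Qo_nth[of n] by (subst sum.Sigma) (auto simp: split_beta)
  also have "\<dots> = (\<Sum>m\<in>tuples n k. ?g m)"
  proof (rule sum.reindex_bij_witness[where i=prj and j=emb])
    fix x assume "x \<in> S"
    then obtain a m where x: "x = (a, m)" "m \<in> tO n a a k" unfolding S_def by auto
    have m: "m 1 = a" "m (Suc n) = a" using x n unfolding tO_def by auto
    have e: "emb x = m(Suc n := 0)" by (simp add: x emb_def)
    have p: "map (\<lambda>i. ell i ((m(Suc n := 0)) i) ((m(Suc n := 0)) (cnext n i))) [1..<n+1]
        = map (\<lambda>i. ell i (m i) (m (Suc i))) [1..<n+1]"
    proof (rule map_cong[OF refl])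
      fix i assume "i \<in> set [1..<n+1]"
      then have i: "1 \<le> i" "i \<le> n" by auto
      show "ell i ((m(Suc n := 0)) i) ((m(Suc n := 0)) (cnext n i)) = ell i (m i) (m (Suc i))"
      proof (cases "i = n")
        case True then show ?thesis using i m by (simp add: cnext_def)
      next
        case False then show ?thesis using i m by (simp add: cnext_def)
      qed
    qed
    have "?g (emb x) = z ^ a * prod_list (map (\<lambda>i. ell i (m i) (m (Suc i))) [1..<n+1])"
      unfolding e p using n m by simp
    then show "?g (emb x) = z ^ fst x * ?f (snd x)" using x by simp
  next
    fix x assume "x \<in> S"
    then obtain a m where x: "x = (a, m)" "m \<in> tO n a a k" unfolding S_def by auto
    then show "prj (emb x) = x" using n unfolding prj_def emb_def tO_def by (auto simp: fun_eq_iff)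
  next
    fix x assume "x \<in> S"
    then obtain a m where x: "x = (a, m)" "m \<in> tO n a a k" unfolding S_def by auto
    have "(\<Sum>i\<in>{1..n}. (m(Suc n := 0)) i) = (\<Sum>i\<in>{1..n}. m i)" by (rule sum.cong) auto
    then show "emb x \<in> tuples n k" using x unfolding emb_def tO_def tuples_def by auto
  next
    fix y assume y: "y \<in> tuples n k"
    then show "emb (prj y) = y" unfolding emb_def prj_def tuples_def by (auto simp: fun_eq_iff)
  next
    fix y assume y: "y \<in> tuples n k"
    have y1: "y 1 \<le> k"
      using y n member_le_sum[of 1 "{1..n}" y] unfolding tuples_def by auto
    have "(\<Sum>i\<in>{1..n}. (y(Suc n := y 1)) i) = (\<Sum>i\<in>{1..n}. y i)" by (rule sum.cong) auto
    then show "prj y \<in> S" using y y1 n unfolding prj_def S_def tO_def tuples_def by auto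
  qed
  finally show "Qop n ell z $ k = isum (\<lambda>a. fps_const (z ^ a) * Qo ell n a a) $ k"
    unfolding Qop_def by simp
qed




lemma mono_add: "mnm e d + mnm e' d = mnm (e + e') d"
  by (rule fps_ext) (simp add: mono_nth)
lemma mono_diff: "mnm e d - mnm e' d = mnm (e - e') d"
  by (rule fps_ext) (simp add: mono_nth)
lemma mono_0: "mnm 0 d = 0"
  by (rule fps_ext) (simp add: mono_nth)
lemma const_mono: "fps_const e * mnm e' d = mnm (e * e') d"
  by (rule fps_ext) (simp add: mono_nth)
lemma X_mono: "fps_X * mnm e d = mnm e (Suc d)"
  by (rule fps_ext) (auto simp: mono_nth)
lemma X_const_mono: "fps_X * fps_const e * mnm e' d = mnm (e * e') (Suc d)"
  by (simp add: mult.assoc const_mono X_mono)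
lemma scale_mono: "fps_scale c (mnm e d) = mnm (c ^ d * e) d"
  by (rule fps_ext) (simp add: mono_nth fps_scale_def)
lemma scale_isum: "fps_scale c (isum f) = isum (\<lambda>x. fps_scale c (f x))"
  by (rule fps_ext) (simp add: fps_scale_def isum_nth sum_distrib_left)
lemma scale_add: "fps_scale c (F + G) = fps_scale c F + fps_scale c G"
  by (rule fps_ext) (simp add: fps_scale_def algebra_simps)
lemma scale_1: "fps_scale c 1 = 1"
  by (rule fps_ext) (simp add: fps_scale_def)
lemma scale_0: "fps_scale c 0 = 0"
  by (rule fps_ext) (simp add: fps_scale_def)
lemma X_comm: "fps_X * F = F * (fps_X :: 'a::ring_1 fps)"
  by (rule fps_mult_fps_X_commute)
lemma Xp_comm: "fps_X ^ k * F = F * (fps_X ^ k :: 'a::ring_1 fps)"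
  by (rule fps_mult_fps_X_power_commute)
lemma vanish_Xp: "vanish k (fps_X ^ k * (F :: 'a::ring_1 fps))"
  by (simp add: vanish_def fps_X_power_mult_nth)

context qb
begin

lemma scale_mult: "fps_scale (emb x) (F * G) = fps_scale (emb x) F * fps_scale (emb x) G"
proof (rule fps_ext)
  fix k
  have "fps_scale (emb x) (F * G) $ k = (\<Sum>i=0..k. emb x ^ k * (F $ i * G $ (k - i)))"
    by (simp add: fps_scale_def fps_mult_nth sum_distrib_left)
  also have "\<dots> = (\<Sum>i=0..k. emb x ^ i * F $ i * (emb x ^ (k - i) * G $ (k - i)))"
  proof (rule sum.cong[OF refl])
    fix i assume "i \<in> {0..k}"
    then have "emb x ^ k = emb x ^ i * emb x ^ (k - i)" by (simp add: power_add[symmetric])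
    then show "emb x ^ k * (F $ i * G $ (k - i)) = emb x ^ i * F $ i * (emb x ^ (k - i) * G $ (k - i))"
      by (simp only: mult.assoc emb_pow_left[of "F $ i"])
  qed
  finally show "fps_scale (emb x) (F * G) $ k = (fps_scale (emb x) F * fps_scale (emb x) G) $ k"
    by (simp add: fps_scale_def fps_mult_nth mult.assoc)
qed

lemma scale_const_mult: "fps_scale (emb x) (fps_const w * F) = fps_const w * fps_scale (emb x) F"
proof (rule fps_ext)
  fix k
  have "emb x ^ k * (w * F $ k) = w * (emb x ^ k * F $ k)"
    by (subst mult.assoc[symmetric], subst emb_central_power, simp only: mult.assoc)
  then show "fps_scale (emb x) (fps_const w * F) $ k = (fps_const w * fps_scale (emb x) F) $ k"
    by (simp only: fps_scale_def fps_nth_Abs_fps fps_mult_left_const_nth)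
qed

lemma scale_z_mult: "fps_scale (emb x) (fps_const (z ^ a) * F) = fps_const (z ^ a) * fps_scale (emb x) F"
  by (rule scale_const_mult)

definition Lm :: "nat \<Rightarrow> nat \<Rightarrow> nat \<Rightarrow> 'a fps" where
  "Lm i r s = (if r = 0 then (if s = 0 then 1 else fps_X * fps_const (betas i))
               else (if s = 0 then fps_const (beta i) else fps_X))"

fun MM :: "nat \<Rightarrow> nat \<Rightarrow> nat \<Rightarrow> 'a fps" where
  "MM 0 r s = (if r = s then 1 else 0)"
| "MM (Suc j) r s = Lm (Suc j) r 0 * MM j 0 s + Lm (Suc j) r 1 * MM j 1 s"

lemma monodromy_MM: "monodromy beta betas j = (MM j 0 0, MM j 0 1, MM j 1 0, MM j 1 1)"
  by (induct j) (simp_all add: mat2_mult_def Lop_def Lm_def)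

lemma Lm_fsub: "fsub {i} (Lm i r s)"
  by (simp add: Lm_def fsub_1 fsub_X fsub_mult fsub_const s_beta s_betas)

lemma MM_fsub: "fsub {1..j} (MM j r s)"
proof (induct j arbitrary: r s)
  case 0 then show ?case by (simp add: fsub_1 fsub_0)
next
  case (Suc j)
  have L: "fsub {1..Suc j} (Lm (Suc j) r t)" for t by (rule fsub_subset[OF Lm_fsub]) auto
  have M: "fsub {1..Suc j} (MM j t s)" for t by (rule fsub_subset[OF Suc]) auto
  show ?case by (simp only: MM.simps) (intro fsub_add fsub_mult L M)
qed

lemma MM_vanish: "vanish 1 (MM (Suc j) r 1)"
proof (induct j arbitrary: r)
  case 0 then show ?case
    by (auto simp: Lm_def vanish_def)
next
  case (Suc j)
  have X: "vanish 1 (fps_X * F)" for F by (simp add: vanish_def)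
  have X2: "vanish 1 (fps_X * G * F)" for F G by (simp add: vanish_def mult.assoc)
  have e: "MM (Suc (Suc j)) r 1 = Lm (Suc (Suc j)) r 0 * MM (Suc j) 0 1 + Lm (Suc (Suc j)) r 1 * MM (Suc j) 1 1"
    by simp
  show ?case unfolding e by (intro vanish_add vanish_mult_left Suc)
qed

lemma Qo_fsub:
  assumes "\<And>i a b. ell i a b \<in> sub {i}"
  shows "fsub {1..j} (Qo ell j a b)"
proof (induct j arbitrary: b)
  case 0 then show ?case by (simp add: fsub_1 fsub_0)
next
  case (Suc j)
  have Q: "fsub {1..Suc j} (Qo ell j a c)" for c by (rule fsub_subset[OF Suc]) auto
  have E: "fsub {1..Suc j} (mnm (ell (Suc j) c b) c)" for c
    by (rule fsub_subset[OF fsub_mono[OF assms]]) auto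
  show ?case by (simp only: Qo.simps) (intro fsub_isum fsub_mult Q E)
qed

end

lemma Qo_vanish: "vanish a (Qo ell (Suc j) a b)"
proof (induct j arbitrary: b)
  case 0
  have "vanish a (Qo ell 0 a c * mnm (ell (Suc 0) c b) c)" for c
    by (cases "a = c") (auto intro: vanish_mono)
  then show ?case by (simp add: isum_vanish)
next
  case (Suc j)
  then show ?case by (simp add: isum_vanish vanish_mult_right)
qed

lemma Qo_term_vanish: "vanish c (Qo ell j a c * mnm e c)"
  by (rule vanish_mult_left[OF vanish_mono]) simp




context qb
begin

lemma step_plus_gen:
  assumes S: "S \<subseteq> {1..n}" and i: "i \<in> {1..n}" "i \<notin> S"
    and L0: "fsub {i} L0" and L1: "fsub {i} L1" and M0: "fsub S M0" and M1: "fsub S M1"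
    and Q: "\<And>c. fsub S (Q c)" and E: "\<And>c. fsub {i} (E c)" and vE: "\<And>c. vanish c (E c)"
  shows "(L0 * M0 + L1 * M1) * isum (\<lambda>c. Q c * E c)
       = isum (\<lambda>c. (M0 * Q c) * (L0 * E c) + (M1 * Q c) * (L1 * E c))"
proof -
  have Si: "S \<inter> {i} = {}" using i by auto
  have iS: "{i} \<subseteq> {1..n}" using i by auto
  have cm: "L * (M * (Q c * E c)) = (M * Q c) * (L * E c)" if "fsub {i} L" "fsub S M" for L M c
  proof -
    have "L * M = M * L" using fsub_comm[OF iS S _ that(1) that(2)] Si by auto
    moreover have "L * Q c = Q c * L" using fsub_comm[OF iS S _ that(1) Q] Si by auto
    ultimately show ?thesis by (metis mult.assoc)
  qed
  have "(L0 * M0 + L1 * M1) * isum (\<lambda>c. Q c * E c) = isum (\<lambda>c. (L0 * M0 + L1 * M1) * (Q c * E c))"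
    by (rule isum_mult_left) (rule vanish_mult_left[OF vE])
  also have "\<dots> = isum (\<lambda>c. (M0 * Q c) * (L0 * E c) + (M1 * Q c) * (L1 * E c))"
    by (rule isum_cong) (simp add: distrib_right mult.assoc cm L0 L1 M0 M1)
  finally show ?thesis .
qed

abbreviation "ep \<equiv> ellp emb beta betas"

definition Gp :: "nat \<Rightarrow> nat \<Rightarrow> nat \<Rightarrow> nat \<Rightarrow> nat \<Rightarrow> 'a fps" where
  "Gp r s i c b = Lm i s r * mnm (ep i c b) c"

lemma Gp00: "Gp 0 0 i c b = mnm (ep i c b) c"
  and Gp01: "Gp 0 1 i c b = mnm (beta i * ep i c b) c"
  and Gp10: "Gp 1 0 i c b = mnm (betas i * ep i c b) (Suc c)"
  and Gp11: "Gp 1 1 i c b = mnm (ep i c b) (Suc c)"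
  by (simp_all add: Gp_def Lm_def const_mono X_const_mono X_mono)

lemmas Gp_simps = Gp00 Gp01 Gp10 Gp11 Gp01[unfolded One_nat_def] Gp10[unfolded One_nat_def]
  Gp11[unfolded One_nat_def]

definition "Ap i c b = fps_scale c0 (mnm (ep i c b) c)"
definition "Bp i c b = mnm (K i ^ 2 * (c1 ^ c * ep i c b)) (Suc c)"

lemma Gp_rels:
  assumes i: "i \<in> {1..n}"
  shows "Gp 0 0 i c b + pr (\<lambda>c. Gp 1 0 i c b) c = Ap i c b"
    and "Gp 1 1 i c b - Gp 1 0 i c (Suc b) = Bp i c b"
    and "Gp 0 1 i c b - Gp 0 0 i c (Suc b) + pr (\<lambda>c. Gp 1 1 i c b) c - pr (\<lambda>c. Gp 1 0 i c (Suc b)) c = 0"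
    and "vanish c (Gp 0 0 i c b)" "vanish c (Gp 0 1 i c b)"
    and "vanish (Suc c) (Gp 1 0 i c b)" "vanish (Suc c) (Gp 1 1 i c b)"
proof -
  show "Gp 0 0 i c b + pr (\<lambda>c. Gp 1 0 i c b) c = Ap i c b"
  proof (cases c)
    case 0 then show ?thesis by (simp add: Gp_simps Ap_def pr_def scale_mono)
  next
    case (Suc c') then show ?thesis
      by (simp add: Gp_simps Ap_def pr_def scale_mono mono_add S1p[OF i])
  qed
  show "Gp 1 1 i c b - Gp 1 0 i c (Suc b) = Bp i c b"
    by (simp add: Gp_simps Bp_def mono_diff S2p[OF i])
  show "Gp 0 1 i c b - Gp 0 0 i c (Suc b) + pr (\<lambda>c. Gp 1 1 i c b) c - pr (\<lambda>c. Gp 1 0 i c (Suc b)) c = 0"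
  proof (cases c)
    case 0 then show ?thesis by (simp add: Gp_simps pr_def mono_diff S3p0[OF i] mono_0)
  next
    case (Suc c')
    let ?A = "beta i * ep i (Suc c') b" and ?B = "ep i (Suc c') (Suc b)"
      and ?C = "ep i c' b" and ?D = "betas i * ep i c' (Suc b)"
    have "Gp 0 1 i c b - Gp 0 0 i c (Suc b) + pr (\<lambda>c. Gp 1 1 i c b) c - pr (\<lambda>c. Gp 1 0 i c (Suc b)) c
      = mnm ?A (Suc c') - mnm ?B (Suc c') + mnm ?C (Suc c') - mnm ?D (Suc c')"
      by (simp add: Suc Gp_simps pr_def)
    also have "\<dots> = mnm (?A - ?B + ?C - ?D) (Suc c')"
      by (simp only: mono_add mono_diff)
    also have "?A - ?B + ?C - ?D = ?A - ?B + (?C - ?D)"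
      by (simp add: algebra_simps)
    finally have "Gp 0 1 i c b - Gp 0 0 i c (Suc b) + pr (\<lambda>c. Gp 1 1 i c b) c - pr (\<lambda>c. Gp 1 0 i c (Suc b)) c
      = mnm (?A - ?B + (?C - ?D)) (Suc c')" .
    then show ?thesis by (simp add: S3p[OF i] mono_0)
  qed
  show "vanish c (Gp 0 0 i c b)" "vanish c (Gp 0 1 i c b)"
    "vanish (Suc c) (Gp 1 0 i c b)" "vanish (Suc c) (Gp 1 1 i c b)"
    by (simp_all add: Gp_simps vanish_mono)
qed

definition "Wp r s j a c = MM j s r * Qo ep j a c"
definition "Kp j = prod_list (map (\<lambda>i. K i ^ 2) [1..<j+1])"
definition "Pp j a c = fps_scale c0 (Qo ep j a c)"
definition "Rp j a c = fps_const (Kp j) * fps_X ^ j * fps_scale c1 (Qo ep j a c)"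

lemma ep_fsub: "fsub {1..j} (Qo ep j a b)"
  by (rule Qo_fsub) (rule ellp_sub)

lemma Wp_step:
  assumes j: "Suc j \<le> n"
  shows "Wp r s (Suc j) a b = isum (\<lambda>c. Wp r 0 j a c * Gp 0 s (Suc j) c b + Wp r 1 j a c * Gp 1 s (Suc j) c b)"
proof -
  have "Wp r s (Suc j) a b = (Lm (Suc j) s 0 * MM j 0 r + Lm (Suc j) s 1 * MM j 1 r)
      * isum (\<lambda>c. Qo ep j a c * mnm (ep (Suc j) c b) c)"
    by (simp add: Wp_def)
  also have "\<dots> = isum (\<lambda>c. (MM j 0 r * Qo ep j a c) * (Lm (Suc j) s 0 * mnm (ep (Suc j) c b) c)
      + (MM j 1 r * Qo ep j a c) * (Lm (Suc j) s 1 * mnm (ep (Suc j) c b) c))"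
    by (rule step_plus_gen[where S="{1..j}" and i="Suc j", OF _ _ _ Lm_fsub Lm_fsub MM_fsub MM_fsub
          ep_fsub fsub_mono[OF ellp_sub] vanish_mono]) (use j in auto)
  finally show ?thesis by (simp add: Wp_def Gp_def)
qed

lemma Pp_step: "Pp (Suc j) a b = isum (\<lambda>c. Pp j a c * Ap (Suc j) c b)"
  by (simp add: Pp_def Ap_def scale_isum scale_mult)

lemma Kp_Suc: "Kp (Suc j) = Kp j * K (Suc j) ^ 2"
  by (simp add: Kp_def)

lemma Rp_step:
  assumes j: "Suc j \<le> n"
  shows "Rp (Suc j) a b = isum (\<lambda>c. Rp j a c * Bp (Suc j) c b)"
proof -
  let ?K = "K (Suc j) ^ 2"
  have Kf: "fsub {Suc j} (fps_const ?K)" by (intro fsub_const s_power s_K) simp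
  have Qf: "fsub {1..j} (fps_scale c1 (Qo ep j a c))" for c by (intro fsub_scale ep_fsub)
  have KQ: "fps_const ?K * fps_scale c1 (Qo ep j a c) = fps_scale c1 (Qo ep j a c) * fps_const ?K" for c
    by (rule fsub_comm[OF _ _ _ Kf Qf]) (use j in auto)
  have trm: "Rp j a c * Bp (Suc j) c b = fps_const (Kp (Suc j)) * fps_X ^ Suc j *
      (fps_scale c1 (Qo ep j a c) * fps_scale c1 (mnm (ep (Suc j) c b) c))" for c
  proof -
    define Q where "Q = fps_scale c1 (Qo ep j a c)"
    define E where "E = fps_scale c1 (mnm (ep (Suc j) c b) c)"
    have B: "Bp (Suc j) c b = fps_const ?K * (fps_X * E)"
      by (simp add: Bp_def E_def scale_mono const_mono X_mono)
    have KQ': "Q * fps_const ?K = fps_const ?K * Q" using KQ[of c] unfolding Q_def by simp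
    have "Rp j a c * Bp (Suc j) c b = fps_const (Kp j) * fps_X ^ j * (Q * fps_const ?K) * (fps_X * E)"
      by (simp add: Rp_def B Q_def mult.assoc)
    also have "\<dots> = fps_const (Kp j) * (fps_X ^ j * fps_const ?K) * ((Q * fps_X) * E)"
      by (simp only: KQ' mult.assoc)
    also have "\<dots> = fps_const (Kp j) * (fps_const ?K * fps_X ^ j) * ((fps_X * Q) * E)"
      by (simp only: Xp_comm[of j "fps_const ?K"] X_comm[of Q])
    also have "\<dots> = fps_const (Kp j * ?K) * (fps_X ^ j * fps_X) * (Q * E)"
      by (simp only: fps_const_mult[symmetric] mult.assoc)
    also have "\<dots> = fps_const (Kp (Suc j)) * fps_X ^ Suc j * (Q * E)"
      by (simp only: Kp_Suc power_Suc2)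
    finally show ?thesis unfolding Q_def E_def .
  qed
  have "Rp (Suc j) a b = fps_const (Kp (Suc j)) * fps_X ^ Suc j *
      isum (\<lambda>c. fps_scale c1 (Qo ep j a c) * fps_scale c1 (mnm (ep (Suc j) c b) c))"
    by (simp add: Rp_def scale_isum scale_mult)
  also have "\<dots> = isum (\<lambda>c. fps_const (Kp (Suc j)) * fps_X ^ Suc j *
      (fps_scale c1 (Qo ep j a c) * fps_scale c1 (mnm (ep (Suc j) c b) c)))"
    by (rule isum_mult_left) (simp add: scale_mono vanish_mult_left vanish_mono)
  finally show ?thesis by (simp only: trm)
qed

end



context qb
begin

lemma plus_inv:
  "j \<le> n \<Longrightarrow> (\<forall>a c. Wp 0 0 j a c + pr (\<lambda>a. Wp 1 0 j a c) a = Pp j a c) \<and>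
     (\<forall>a c. Wp 1 1 j a c - Wp 1 0 j a (Suc c) = Rp j a c) \<and>
     (\<forall>a c. Wp 0 1 j a c - Wp 0 0 j a (Suc c) + pr (\<lambda>a. Wp 1 1 j a c) a - pr (\<lambda>a. Wp 1 0 j a (Suc c)) a = 0)"
proof (induct j)
  case 0
  have W: "Wp r s 0 a c = (if s = r \<and> a = c then 1 else 0)" for r s a c by (simp add: Wp_def)
  have P: "Pp 0 a c = (if a = c then 1 else 0)" for a c by (simp add: Pp_def scale_1 scale_0)
  have R: "Rp 0 a c = (if a = c then 1 else 0)" for a c by (simp add: Rp_def Kp_def scale_1 scale_0)
  show ?case by (simp add: W P R pr_def)
next
  case (Suc j)
  then have j: "Suc j \<le> n" and IH: "j \<le> n" by auto
  have i: "Suc j \<in> {1..n}" using j by auto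
  note IH' = Suc(1)[OF IH]
  note S = step_lemma[where Waa="Wp 0 0 j" and Wab="Wp 0 1 j" and Wba="Wp 1 0 j" and Wbb="Wp 1 1 j"
      and Gaa="Gp 0 0 (Suc j)" and Gab="Gp 0 1 (Suc j)" and Gba="Gp 1 0 (Suc j)" and Gbb="Gp 1 1 (Suc j)"
      and P="Pp j" and R="Rp j" and A="Ap (Suc j)" and B="Bp (Suc j)",
      OF _ _ _ Gp_rels(1)[OF i] Gp_rels(2)[OF i] Gp_rels(3)[OF i] Gp_rels(4-7)[OF i]]
  have I1: "\<And>a c. Wp 0 0 j a c + pr (\<lambda>a. Wp 1 0 j a c) a = Pp j a c"
    and I2: "\<And>a c. Wp 1 1 j a c - Wp 1 0 j a (Suc c) = Rp j a c"
    and I3: "\<And>a c. Wp 0 1 j a c - Wp 0 0 j a (Suc c) + pr (\<lambda>a. Wp 1 1 j a c) a - pr (\<lambda>a. Wp 1 0 j a (Suc c)) a = 0"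
    using IH' by blast+
  note T = S[OF I1 I2 I3]
  show ?case unfolding Wp_step[OF j] Pp_step Rp_step[OF j] by (intro conjI allI T)
qed

end



context qb
begin

lemma transfer_MM: "transfer n beta betas z = MM n 0 0 + fps_const z * MM n 1 1"
  by (simp add: transfer_def monodromy_MM)

lemma const_z_Suc: "fps_const (z ^ Suc a) = fps_const z * fps_const (z ^ a)"
  by (simp add: fps_const_mult)

lemma zl: "F * (fps_const (z ^ a) * G) = fps_const (z ^ a) * (F * G)"
  by (metis mult.assoc z_fps_comm)

lemma plus_main:
  assumes n: "n \<ge> 1"
  shows "transfer n beta betas z * Qplus n emb beta betas z
           = fps_scale c0 (Qplus n emb beta betas z)
             + Delta n K z * fps_scale c1 (Qplus n emb beta betas z)"
proof -
  obtain n' where n': "n = Suc n'" using n by (cases n) auto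
  note inv = plus_inv[OF order_refl]
  have w1: "Wp 0 0 n a a = Pp n a a - pr (\<lambda>a'. Wp 1 0 n a' a) a" for a
    using inv by (metis add_diff_cancel)
  have w2: "Wp 1 1 n a a = Rp n a a + Wp 1 0 n a (Suc a)" for a
    using inv by (metis diff_add_cancel)
  have vQ: "vanish a (Qo ep n a b)" for a b unfolding n' by (rule Qo_vanish)
  have Qp: "Qplus n emb beta betas z = isum (\<lambda>a. fps_const (z ^ a) * Qo ep n a a)"
    unfolding Qplus_def by (rule Qop_eq[OF n])
  define h where "h a = fps_const (z ^ Suc a) * Wp 1 0 n a (Suc a)" for a
  have vh: "vanish (Suc a) (h a)" for a
  proof -
    have "vanish (1 + a) (MM n 0 1 * Qo ep n a (Suc a))"
      by (rule vanish_mult) (use MM_vanish vQ n' in auto)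
    then show ?thesis unfolding h_def Wp_def by (simp add: vanish_mult_left)
  qed
  have integrand: "transfer n beta betas z * (fps_const (z ^ a) * Qo ep n a a)
      = (fps_const (z ^ a) * Pp n a a + fps_const (z ^ Suc a) * Rp n a a) + (h a - pr h a)" for a
  proof -
    have "transfer n beta betas z * (fps_const (z ^ a) * Qo ep n a a)
        = fps_const (z ^ a) * Wp 0 0 n a a + fps_const (z ^ Suc a) * Wp 1 1 n a a"
      unfolding transfer_MM Wp_def const_z_Suc
      by (simp only: distrib_right distrib_left mult.assoc zl)
    also have "\<dots> = (fps_const (z ^ a) * Pp n a a + fps_const (z ^ Suc a) * Rp n a a)
        + (h a - fps_const (z ^ a) * pr (\<lambda>a'. Wp 1 0 n a' a) a)"
      unfolding w1 w2 h_def by (simp add: algebra_simps)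
    also have "fps_const (z ^ a) * pr (\<lambda>a'. Wp 1 0 n a' a) a = pr h a"
      unfolding h_def pr_def by simp
    finally show ?thesis .
  qed
  have "transfer n beta betas z * Qplus n emb beta betas z
      = isum (\<lambda>a. transfer n beta betas z * (fps_const (z ^ a) * Qo ep n a a))"
    unfolding Qp by (rule isum_mult_left) (rule vanish_mult_left[OF vQ])
  also have "\<dots> = isum (\<lambda>a. fps_const (z ^ a) * Pp n a a) + isum (\<lambda>a. fps_const (z ^ Suc a) * Rp n a a)"
    unfolding integrand isum_add isum_telescope[OF vh] by simp
  also have "isum (\<lambda>a. fps_const (z ^ a) * Pp n a a) = fps_scale c0 (Qplus n emb beta betas z)"
    unfolding Qp Pp_def scale_isum scale_const_mult ..
  also have "isum (\<lambda>a. fps_const (z ^ Suc a) * Rp n a a) = Delta n K z * fps_scale c1 (Qplus n emb beta betas z)"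
  proof -
    have t: "fps_const (z ^ Suc a) * Rp n a a
        = fps_const (z * Kp n) * fps_X ^ n * (fps_const (z ^ a) * fps_scale c1 (Qo ep n a a))" for a
    proof -
      have "fps_const (z ^ a) * (fps_const (Kp n) * fps_X ^ n) = fps_const (Kp n) * fps_X ^ n * fps_const (z ^ a)"
        by (rule z_fps_comm)
      then show ?thesis unfolding Rp_def const_z_Suc fps_const_mult[symmetric]
        by (simp only: mult.assoc) (simp only: mult.assoc[symmetric])
    qed
    have "isum (\<lambda>a. fps_const (z ^ Suc a) * Rp n a a)
        = fps_const (z * Kp n) * fps_X ^ n * isum (\<lambda>a. fps_const (z ^ a) * fps_scale c1 (Qo ep n a a))"
      unfolding t by (rule isum_mult_left[symmetric]) (simp add: fps_scale_def vanish_def vQ[unfolded vanish_def])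
    then show ?thesis unfolding Qp Delta_def Kp_def scale_isum scale_const_mult by simp
  qed
  finally show ?thesis .
qed

end



lemma mono_const: "mnm e d * fps_const e' = mnm (e * e') d"
  by (rule fps_ext) (simp add: mono_nth)
lemma mono_X: "mnm e d * fps_X = mnm e (Suc d)"
  by (rule fps_ext) (auto simp: mono_nth)
lemma mono_X_const: "mnm e d * (fps_X * fps_const e') = mnm (e * e') (Suc d)"
  by (simp add: mult.assoc[symmetric] mono_X mono_const)

context qb
begin

lemma step_minus_gen:
  assumes S: "S \<subseteq> {1..n}" and i: "i \<in> {1..n}" "i \<notin> S"
    and L0: "fsub {i} L0" and L1: "fsub {i} L1" and M0: "fsub S M0" and M1: "fsub S M1"
    and Q: "\<And>c. fsub S (Q c)" and E: "\<And>c. fsub {i} (E c)" and vE: "\<And>c. vanish c (E c)"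
  shows "isum (\<lambda>c. Q c * E c) * (L0 * M0 + L1 * M1)
       = isum (\<lambda>c. (Q c * M0) * (E c * L0) + (Q c * M1) * (E c * L1))"
proof -
  have Si: "{i} \<inter> S = {}" using i by auto
  have iS: "{i} \<subseteq> {1..n}" using i by auto
  have cm: "(Q c * E c) * (L * M) = (Q c * M) * (E c * L)" if "fsub {i} L" "fsub S M" for L M c
  proof -
    have "(E c * L) * M = M * (E c * L)"
      using fsub_comm[OF iS S Si fsub_mult[OF E that(1)] that(2)] .
    then show ?thesis by (metis mult.assoc)
  qed
  have "isum (\<lambda>c. Q c * E c) * (L0 * M0 + L1 * M1) = isum (\<lambda>c. (Q c * E c) * (L0 * M0 + L1 * M1))"
    by (rule isum_mult_right) (rule vanish_mult_left[OF vE])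
  also have "\<dots> = isum (\<lambda>c. (Q c * M0) * (E c * L0) + (Q c * M1) * (E c * L1))"
    by (rule isum_cong) (simp add: distrib_left cm L0 L1 M0 M1)
  finally show ?thesis .
qed

abbreviation "em \<equiv> ellm emb beta betas"

definition Gm :: "nat \<Rightarrow> nat \<Rightarrow> nat \<Rightarrow> nat \<Rightarrow> nat \<Rightarrow> 'a fps" where
  "Gm r s i c b = mnm (em i c b) c * Lm i s r"

lemma Gm00: "Gm 0 0 i c b = mnm (em i c b) c"
  and Gm01: "Gm 0 1 i c b = mnm (em i c b * beta i) c"
  and Gm10: "Gm 1 0 i c b = mnm (em i c b * betas i) (Suc c)"
  and Gm11: "Gm 1 1 i c b = mnm (em i c b) (Suc c)"
  by (simp_all add: Gm_def Lm_def mono_const mono_X_const mono_X)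

lemmas Gm_simps = Gm00 Gm01 Gm10 Gm11 Gm01[unfolded One_nat_def] Gm10[unfolded One_nat_def]
  Gm11[unfolded One_nat_def]

definition "Am i c b = fps_scale c1 (mnm (em i c b) c)"
definition "Bm i c b = mnm (c0 ^ Suc b * (K i ^ 2 * em i c b)) (Suc c)"

lemma Gm_rels:
  assumes i: "i \<in> {1..n}"
  shows "Gm 0 0 i c b + pr (\<lambda>c. Gm 1 0 i c b) c = Am i c b"
    and "Gm 1 1 i c b - Gm 1 0 i c (Suc b) = Bm i c b"
    and "Gm 0 1 i c b - Gm 0 0 i c (Suc b) + pr (\<lambda>c. Gm 1 1 i c b) c - pr (\<lambda>c. Gm 1 0 i c (Suc b)) c = 0"
    and "vanish c (Gm 0 0 i c b)" "vanish c (Gm 0 1 i c b)"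
    and "vanish (Suc c) (Gm 1 0 i c b)" "vanish (Suc c) (Gm 1 1 i c b)"
proof -
  show "Gm 0 0 i c b + pr (\<lambda>c. Gm 1 0 i c b) c = Am i c b"
  proof (cases c)
    case 0 then show ?thesis by (simp add: Gm_simps Am_def pr_def scale_mono)
  next
    case (Suc c') then show ?thesis
      by (simp add: Gm_simps Am_def pr_def scale_mono mono_add S1m[OF i])
  qed
  show "Gm 1 1 i c b - Gm 1 0 i c (Suc b) = Bm i c b"
    by (simp add: Gm_simps Bm_def mono_diff S2m[OF i])
  show "Gm 0 1 i c b - Gm 0 0 i c (Suc b) + pr (\<lambda>c. Gm 1 1 i c b) c - pr (\<lambda>c. Gm 1 0 i c (Suc b)) c = 0"
  proof (cases c)
    case 0 then show ?thesis by (simp add: Gm_simps pr_def mono_diff S3m0[OF i] mono_0)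
  next
    case (Suc c')
    let ?A = "em i (Suc c') b * beta i" and ?B = "em i (Suc c') (Suc b)"
      and ?C = "em i c' b" and ?D = "em i c' (Suc b) * betas i"
    have "Gm 0 1 i c b - Gm 0 0 i c (Suc b) + pr (\<lambda>c. Gm 1 1 i c b) c - pr (\<lambda>c. Gm 1 0 i c (Suc b)) c
      = mnm ?A (Suc c') - mnm ?B (Suc c') + mnm ?C (Suc c') - mnm ?D (Suc c')"
      by (simp add: Suc Gm_simps pr_def)
    also have "\<dots> = mnm (?A - ?B + ?C - ?D) (Suc c')"
      by (simp only: mono_add mono_diff)
    also have "?A - ?B + ?C - ?D = ?A - ?B + (?C - ?D)"
      by (simp add: algebra_simps)
    finally have "Gm 0 1 i c b - Gm 0 0 i c (Suc b) + pr (\<lambda>c. Gm 1 1 i c b) c - pr (\<lambda>c. Gm 1 0 i c (Suc b)) c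
      = mnm (?A - ?B + (?C - ?D)) (Suc c')" .
    then show ?thesis by (simp add: S3m[OF i] mono_0)
  qed
  show "vanish c (Gm 0 0 i c b)" "vanish c (Gm 0 1 i c b)"
    "vanish (Suc c) (Gm 1 0 i c b)" "vanish (Suc c) (Gm 1 1 i c b)"
    by (simp_all add: Gm_simps vanish_mono)
qed

definition "Wm r s j a c = Qo em j a c * MM j s r"
definition "rho j a c = (qf ^ 2) ^ j * (qf ^ 2) ^ c * (inverse qf ^ 2) ^ a"
definition "Pm j a c = fps_scale c1 (Qo em j a c)"
definition "Rm j a c = fps_const (Kp j * emb (rho j a c)) * fps_X ^ j * fps_scale c0 (Qo em j a c)"

lemma em_fsub: "fsub {1..j} (Qo em j a b)"
  by (rule Qo_fsub) (rule ellm_sub)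

lemma Wm_step:
  assumes j: "Suc j \<le> n"
  shows "Wm r s (Suc j) a b = isum (\<lambda>c. Wm r 0 j a c * Gm 0 s (Suc j) c b + Wm r 1 j a c * Gm 1 s (Suc j) c b)"
proof -
  have "Wm r s (Suc j) a b = isum (\<lambda>c. Qo em j a c * mnm (em (Suc j) c b) c)
      * (Lm (Suc j) s 0 * MM j 0 r + Lm (Suc j) s 1 * MM j 1 r)"
    by (simp add: Wm_def)
  also have "\<dots> = isum (\<lambda>c. (Qo em j a c * MM j 0 r) * (mnm (em (Suc j) c b) c * Lm (Suc j) s 0)
      + (Qo em j a c * MM j 1 r) * (mnm (em (Suc j) c b) c * Lm (Suc j) s 1))"
    by (rule step_minus_gen[where S="{1..j}" and i="Suc j", OF _ _ _ Lm_fsub Lm_fsub MM_fsub MM_fsub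
          em_fsub fsub_mono[OF ellm_sub] vanish_mono]) (use j in auto)
  finally show ?thesis by (simp add: Wm_def Gm_def)
qed

lemma Pm_step: "Pm (Suc j) a b = isum (\<lambda>c. Pm j a c * Am (Suc j) c b)"
  by (simp add: Pm_def Am_def scale_isum scale_mult)

lemma rho_Suc: "rho j a c * ((qf ^ 2) ^ Suc b * (inverse qf ^ 2) ^ c) = rho (Suc j) a b"
proof -
  have "(qf ^ 2) ^ c * (inverse qf ^ 2) ^ c = (1::cq)"
    using power_mult_distrib[of "qf ^ 2" "inverse qf ^ 2" c] qinv_sq(2) by simp
  then show ?thesis unfolding rho_def by (simp add: algebra_simps)
qed

lemma Rm_step:
  assumes j: "Suc j \<le> n"
  shows "Rm (Suc j) a b = isum (\<lambda>c. Rm j a c * Bm (Suc j) c b)"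
proof -
  let ?K = "K (Suc j) ^ 2"
  have Kf: "fsub {Suc j} (fps_const ?K)" by (intro fsub_const s_power s_K) simp
  have Qf: "fsub {1..j} (fps_scale c0 (Qo em j a c))" for c by (intro fsub_scale em_fsub)
  have KQ: "fps_const ?K * fps_scale c0 (Qo em j a c) = fps_scale c0 (Qo em j a c) * fps_const ?K" for c
    by (rule fsub_comm[OF _ _ _ Kf Qf]) (use j in auto)
  have trm: "Rm j a c * Bm (Suc j) c b = fps_const (Kp (Suc j) * emb (rho (Suc j) a b)) * fps_X ^ Suc j *
      (fps_scale c0 (Qo em j a c) * fps_scale c0 (mnm (em (Suc j) c b) c))" for c
  proof -
    define Q where "Q = fps_scale c0 (Qo em j a c)"
    define E where "E = fps_scale c0 (mnm (em (Suc j) c b) c)"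
    define s where "s = (qf ^ 2) ^ Suc b * (inverse qf ^ 2) ^ c"
    have B: "Bm (Suc j) c b = fps_const ?K * (fps_const (emb s) * (fps_X * E))"
    proof -
      have "emb s * c0 ^ c = c0 ^ Suc b"
      proof -
        have "(inverse qf ^ 2) ^ c * (qf ^ 2) ^ c = (1::cq)"
          using power_mult_distrib[of "inverse qf ^ 2" "qf ^ 2" c] qinv_sq(1) by simp
        then have "s * (qf ^ 2) ^ c = (qf ^ 2) ^ Suc b" unfolding s_def by (simp add: algebra_simps)
        then show ?thesis by (simp only: emb_mult[symmetric] emb_power[symmetric])
      qed
      then have "?K * (emb s * (c0 ^ c * em (Suc j) c b)) = c0 ^ Suc b * (?K * em (Suc j) c b)"
        by (simp only: mult.assoc[symmetric]) (simp only: mult.assoc emb_pow_left[of ?K])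
      then show ?thesis
        by (simp add: Bm_def E_def scale_mono const_mono X_mono)
    qed
    have KQ': "Q * fps_const ?K = fps_const ?K * Q" using KQ[of c] unfolding Q_def by simp
    have sQ: "Q * fps_const (emb s) = fps_const (emb s) * Q" by (rule emb_fps_comm[symmetric])
    have "Rm j a c * Bm (Suc j) c b
        = fps_const (Kp j * emb (rho j a c)) * fps_X ^ j * (Q * fps_const ?K) * (fps_const (emb s) * (fps_X * E))"
      by (simp add: Rm_def B Q_def mult.assoc)
    also have "\<dots> = fps_const (Kp j * emb (rho j a c)) * (fps_X ^ j * fps_const ?K) * ((Q * fps_const (emb s)) * (fps_X * E))"
      by (simp only: KQ' mult.assoc)
    also have "\<dots> = fps_const (Kp j * emb (rho j a c)) * (fps_const ?K * fps_X ^ j) * ((fps_const (emb s) * Q) * (fps_X * E))"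
      by (simp only: Xp_comm[of j "fps_const ?K"] sQ)
    also have "\<dots> = fps_const (Kp j * emb (rho j a c)) * fps_const ?K * (fps_X ^ j * fps_const (emb s)) * ((Q * fps_X) * E)"
      by (simp only: mult.assoc)
    also have "\<dots> = fps_const (Kp j * emb (rho j a c)) * fps_const ?K * (fps_const (emb s) * fps_X ^ j) * ((fps_X * Q) * E)"
      by (simp only: Xp_comm[of j "fps_const (emb s)"] X_comm[of Q])
    also have "\<dots> = fps_const (Kp j * emb (rho j a c) * ?K * emb s) * (fps_X ^ j * fps_X) * (Q * E)"
      by (simp only: fps_const_mult[symmetric] mult.assoc)
    also have "Kp j * emb (rho j a c) * ?K * emb s = Kp (Suc j) * emb (rho (Suc j) a b)"
    proof -
      have "Kp j * emb (rho j a c) * ?K * emb s = Kp j * (?K * (emb (rho j a c) * emb s))"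
        by (simp only: mult.assoc emb_left[of ?K])
      also have "\<dots> = Kp (Suc j) * emb (rho (Suc j) a b)"
        by (simp only: emb_mult[symmetric] s_def rho_Suc Kp_Suc mult.assoc)
      finally show ?thesis .
    qed
    also have "fps_X ^ j * fps_X = (fps_X ^ Suc j :: 'a fps)" by (simp only: power_Suc2)
    finally show ?thesis unfolding Q_def E_def .
  qed
  have "Rm (Suc j) a b = fps_const (Kp (Suc j) * emb (rho (Suc j) a b)) * fps_X ^ Suc j *
      isum (\<lambda>c. fps_scale c0 (Qo em j a c) * fps_scale c0 (mnm (em (Suc j) c b) c))"
    by (simp add: Rm_def scale_isum scale_mult)
  also have "\<dots> = isum (\<lambda>c. fps_const (Kp (Suc j) * emb (rho (Suc j) a b)) * fps_X ^ Suc j *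
      (fps_scale c0 (Qo em j a c) * fps_scale c0 (mnm (em (Suc j) c b) c)))"
    by (rule isum_mult_left) (simp add: scale_mono vanish_mult_left vanish_mono)
  finally show ?thesis by (simp only: trm)
qed

end



context qb
begin

lemma rho_diag: "rho j a a = (qf ^ 2) ^ j"
proof -
  have "(qf ^ 2) ^ a * (inverse qf ^ 2) ^ a = (1::cq)"
    using power_mult_distrib[of "qf ^ 2" "inverse qf ^ 2" a] qinv_sq(2) by simp
  then show ?thesis unfolding rho_def by (simp add: mult.assoc)
qed

lemma minus_inv:
  "j \<le> n \<Longrightarrow> (\<forall>a c. Wm 0 0 j a c + pr (\<lambda>a. Wm 1 0 j a c) a = Pm j a c) \<and>
     (\<forall>a c. Wm 1 1 j a c - Wm 1 0 j a (Suc c) = Rm j a c) \<and>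
     (\<forall>a c. Wm 0 1 j a c - Wm 0 0 j a (Suc c) + pr (\<lambda>a. Wm 1 1 j a c) a - pr (\<lambda>a. Wm 1 0 j a (Suc c)) a = 0)"
proof (induct j)
  case 0
  have W: "Wm r s 0 a c = (if s = r \<and> a = c then 1 else 0)" for r s a c by (simp add: Wm_def)
  have P: "Pm 0 a c = (if a = c then 1 else 0)" for a c by (simp add: Pm_def scale_1 scale_0)
  have R: "Rm 0 a c = (if a = c then 1 else 0)" for a c by (simp add: Rm_def Kp_def scale_1 scale_0 rho_diag)
  show ?case by (simp add: W P R pr_def)
next
  case (Suc j)
  then have j: "Suc j \<le> n" and IH: "j \<le> n" by auto
  have i: "Suc j \<in> {1..n}" using j by auto
  note IH' = Suc(1)[OF IH]
  note S = step_lemma[where Waa="Wm 0 0 j" and Wab="Wm 0 1 j" and Wba="Wm 1 0 j" and Wbb="Wm 1 1 j"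
      and Gaa="Gm 0 0 (Suc j)" and Gab="Gm 0 1 (Suc j)" and Gba="Gm 1 0 (Suc j)" and Gbb="Gm 1 1 (Suc j)"
      and P="Pm j" and R="Rm j" and A="Am (Suc j)" and B="Bm (Suc j)",
      OF _ _ _ Gm_rels(1)[OF i] Gm_rels(2)[OF i] Gm_rels(3)[OF i] Gm_rels(4-7)[OF i]]
  have I1: "\<And>a c. Wm 0 0 j a c + pr (\<lambda>a. Wm 1 0 j a c) a = Pm j a c"
    and I2: "\<And>a c. Wm 1 1 j a c - Wm 1 0 j a (Suc c) = Rm j a c"
    and I3: "\<And>a c. Wm 0 1 j a c - Wm 0 0 j a (Suc c) + pr (\<lambda>a. Wm 1 1 j a c) a - pr (\<lambda>a. Wm 1 0 j a (Suc c)) a = 0"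
    using IH' by blast+
  note T = S[OF I1 I2 I3]
  show ?case unfolding Wm_step[OF j] Pm_step Rm_step[OF j] by (intro conjI allI T)
qed

lemma const_z_Suc2: "fps_const (z ^ Suc a) = fps_const (z ^ a) * fps_const z"
  by (simp only: fps_const_mult power_Suc2)

lemma zc: "F * fps_const z = fps_const z * F"
  by (rule fps_ext) (simp only: fps_mult_left_const_nth fps_mult_right_const_nth z_central)

lemma minus_main:
  assumes n: "n \<ge> 1"
  shows "Qminus n emb beta betas z * transfer n beta betas z
           = fps_scale c1 (Qminus n emb beta betas z)
             + fps_scale c0 (Delta n K z) * fps_scale c0 (Qminus n emb beta betas z)"
proof -
  obtain n' where n': "n = Suc n'" using n by (cases n) auto
  note inv = minus_inv[OF order_refl]
  have w1: "Wm 0 0 n a a = Pm n a a - pr (\<lambda>a'. Wm 1 0 n a' a) a" for a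
    using inv by (metis add_diff_cancel)
  have w2: "Wm 1 1 n a a = Rm n a a + Wm 1 0 n a (Suc a)" for a
    using inv by (metis diff_add_cancel)
  have vQ: "vanish a (Qo em n a b)" for a b unfolding n' by (rule Qo_vanish)
  have Qm: "Qminus n emb beta betas z = isum (\<lambda>a. fps_const (z ^ a) * Qo em n a a)"
    unfolding Qminus_def by (rule Qop_eq[OF n])
  define h where "h a = fps_const (z ^ Suc a) * Wm 1 0 n a (Suc a)" for a
  have vh: "vanish (Suc a) (h a)" for a
  proof -
    have "vanish (a + 1) (Qo em n a (Suc a) * MM n 0 1)"
      by (rule vanish_mult) (use MM_vanish vQ n' in auto)
    then show ?thesis unfolding h_def Wm_def by (simp add: vanish_mult_left)
  qed
  have integrand: "(fps_const (z ^ a) * Qo em n a a) * transfer n beta betas z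
      = (fps_const (z ^ a) * Pm n a a + fps_const (z ^ Suc a) * Rm n a a) + (h a - pr h a)" for a
  proof -
    have "(fps_const (z ^ a) * Qo em n a a) * transfer n beta betas z
        = fps_const (z ^ a) * Wm 0 0 n a a + fps_const (z ^ Suc a) * Wm 1 1 n a a"
    proof -
      have "Qo em n a a * (fps_const z * MM n 1 1) = fps_const z * (Qo em n a a * MM n 1 1)"
        by (simp only: mult.assoc[symmetric] zc)
      then show ?thesis unfolding transfer_MM Wm_def const_z_Suc2
        by (simp only: distrib_left mult.assoc)
    qed
    also have "\<dots> = (fps_const (z ^ a) * Pm n a a + fps_const (z ^ Suc a) * Rm n a a)
        + (h a - fps_const (z ^ a) * pr (\<lambda>a'. Wm 1 0 n a' a) a)"
      unfolding w1 w2 h_def by (simp add: algebra_simps)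
    also have "fps_const (z ^ a) * pr (\<lambda>a'. Wm 1 0 n a' a) a = pr h a"
      unfolding h_def pr_def by simp
    finally show ?thesis .
  qed
  have "Qminus n emb beta betas z * transfer n beta betas z
      = isum (\<lambda>a. (fps_const (z ^ a) * Qo em n a a) * transfer n beta betas z)"
    unfolding Qm by (rule isum_mult_right) (rule vanish_mult_left[OF vQ])
  also have "\<dots> = isum (\<lambda>a. fps_const (z ^ a) * Pm n a a) + isum (\<lambda>a. fps_const (z ^ Suc a) * Rm n a a)"
    unfolding integrand isum_add isum_telescope[OF vh] by simp
  also have "isum (\<lambda>a. fps_const (z ^ a) * Pm n a a) = fps_scale c1 (Qminus n emb beta betas z)"
    unfolding Qm Pm_def scale_isum scale_const_mult ..
  also have "isum (\<lambda>a. fps_const (z ^ Suc a) * Rm n a a)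
      = fps_scale c0 (Delta n K z) * fps_scale c0 (Qminus n emb beta betas z)"
  proof -
    have t: "fps_const (z ^ Suc a) * Rm n a a
        = fps_const (z * (Kp n * c0 ^ n)) * fps_X ^ n * (fps_const (z ^ a) * fps_scale c0 (Qo em n a a))" for a
    proof -
      have "fps_const (z ^ a) * (fps_const (Kp n * c0 ^ n) * fps_X ^ n) = fps_const (Kp n * c0 ^ n) * fps_X ^ n * fps_const (z ^ a)"
        by (rule z_fps_comm)
      then show ?thesis unfolding Rm_def const_z_Suc fps_const_mult[symmetric] rho_diag emb_power
        by (simp only: mult.assoc) (simp only: mult.assoc[symmetric])
    qed
    have "isum (\<lambda>a. fps_const (z ^ Suc a) * Rm n a a)
        = fps_const (z * (Kp n * c0 ^ n)) * fps_X ^ n * isum (\<lambda>a. fps_const (z ^ a) * fps_scale c0 (Qo em n a a))"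
      unfolding t by (rule isum_mult_left[symmetric]) (simp add: fps_scale_def vanish_def vQ[unfolded vanish_def])
    also have "fps_const (z * (Kp n * c0 ^ n)) * fps_X ^ n = fps_scale c0 (Delta n K z)"
    proof -
      have "fps_scale c0 (Delta n K z) = fps_const (z * Kp n) * mnm (c0 ^ n) n"
        unfolding Delta_def Kp_def scale_const_mult
        using scale_mono[of c0 1 n] by (simp add: mnm_def)
      also have "\<dots> = fps_const (z * Kp n * c0 ^ n) * fps_X ^ n"
        by (simp add: mnm_def mult.assoc[symmetric])
      finally show ?thesis by (simp add: mult.assoc)
    qed
    finally show ?thesis unfolding Qm scale_isum scale_const_mult .
  qed
  finally show ?thesis .
qed

end


theorem mainTheorem4:
  fixes n :: nat and emb :: "cq \<Rightarrow> 'a::ring_1"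
    and beta betas K Kinv :: "nat \<Rightarrow> 'a" and z :: 'a
  assumes "n \<ge> 1"
    and "qboson_alg n emb beta betas K Kinv z"
  shows "transfer n beta betas z * Qplus n emb beta betas z
           = fps_scale (emb (qf ^ 2)) (Qplus n emb beta betas z)
             + Delta n K z * fps_scale (emb (inverse qf ^ 2)) (Qplus n emb beta betas z)
         \<and> Qminus n emb beta betas z * transfer n beta betas z
           = fps_scale (emb (inverse qf ^ 2)) (Qminus n emb beta betas z)
             + fps_scale (emb (qf ^ 2)) (Delta n K z) * fps_scale (emb (qf ^ 2)) (Qminus n emb beta betas z)"
proof -
  interpret qb n emb beta betas K Kinv z by unfold_locales (rule assms(2))
  show ?thesis using plus_main[OF assms(1)] minus_main[OF assms(1)] by simp
qed

end
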